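(* Let $w$ be well-ordering on an interval $I\subset\mathbb R$, $n\in\mathbb N$, and $x_1\le x_2\le\dots\le x_{2n}$ points of $I$. For every $A\subset\{1,\dots,2n\}$ with $|A|=n$, $c_n(x_{A_o})+c_n(x_{A_e})\le c_n(x_A)+c_n(x_{A^c}),$ where $A_o=\{1,3,\dots,2n-1\}$, $A_e=\{2,4,\dots,2n\}$, $A^c=\{1,\dots,2n\}\setminus A$. Moreover, if $w$ is strictly well-ordering and $c_n(x_A)+c_n(x_{A^c})<\infty$, then $c_n(x_A)+c_n(x_{A^c})=\min\{c_n(x_B)+c_n(x_{B^c}):B\subset\{1,\dots,2n\},|B|=n\}$ if and only if $\sum_{k\in A}\delta_{x_k}=\sum_{k=1}^n\delta_{x_{2k}}$ or $\sum_{k\in A}\delta_{x_k}=\sum_{k=1}^n\delta_{x_{2k-1}}$.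
   Context: $c_n(y_1,\dots,y_n)=\sum_{i\ne j}w(y_i,y_j)$ (ordered pairs). For $B=\{b_1<\dots<b_n\}$, $x_B=(x_{b_1},\dots,x_{b_n})$. Well-ordering: $w:I\times I\to\mathbb R\cup\{+\infty\}$ continuous symmetric with, for all $y_1\le y_2\le y_3\le y_4$ in $I$, $w(y_1,y_3)+w(y_2,y_4)=\min_\sigma[w(y_{\sigma(1)},y_{\sigma(2)})+w(y_{\sigma(3)},y_{\sigma(4)})]$ over permutations $\sigma$ of $\{1,2,3,4\}$. Strictly well-ordering: additionally, equality with a given $\sigma$ holds only if the sum is $\infty$ or $\delta_{y_1}+\delta_{y_3}$ equals $\delta_{y_{\sigma(1)}}+\delta_{y_{\sigma(2)}}$ or $\delta_{y_{\sigma(3)}}+\delta_{y_{\sigma(4)}}$. *)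

theory Defs
  imports "HOL-Analysis.Analysis" "HOL-Library.Multiset" "HOL-Library.Extended_Real"
begin

text \<open>Values in R \<union> {+\<infinity>} are modelled in ereal, with -\<infinity> excluded.\<close>

definition well_ordering :: "real set \<Rightarrow> (real \<Rightarrow> real \<Rightarrow> ereal) \<Rightarrow> bool" where
  "well_ordering I w \<longleftrightarrow>
     (\<forall>a\<in>I. \<forall>b\<in>I. w a b \<noteq> -\<infinity>) \<and>
     continuous_on (I \<times> I) (\<lambda>p. w (fst p) (snd p)) \<and>
     (\<forall>a\<in>I. \<forall>b\<in>I. w a b = w b a) \<and>
     (\<forall>y::nat \<Rightarrow> real. (\<forall>k\<in>{1..4}. y k \<in> I) \<and> y 1 \<le> y 2 \<and> y 2 \<le> y 3 \<and> y 3 \<le> y 4 \<longrightarrow>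
        w (y 1) (y 3) + w (y 2) (y 4) =
        Min ((\<lambda>\<sigma>. w (y (\<sigma> 1)) (y (\<sigma> 2)) + w (y (\<sigma> 3)) (y (\<sigma> 4))) ` {\<sigma>. \<sigma> permutes {1..4::nat}}))"

definition strictly_well_ordering :: "real set \<Rightarrow> (real \<Rightarrow> real \<Rightarrow> ereal) \<Rightarrow> bool" where
  "strictly_well_ordering I w \<longleftrightarrow> well_ordering I w \<and>
     (\<forall>y::nat \<Rightarrow> real. \<forall>\<sigma>. (\<forall>k\<in>{1..4}. y k \<in> I) \<and> y 1 \<le> y 2 \<and> y 2 \<le> y 3 \<and> y 3 \<le> y 4
        \<and> \<sigma> permutes {1..4::nat}
        \<and> w (y 1) (y 3) + w (y 2) (y 4) = w (y (\<sigma> 1)) (y (\<sigma> 2)) + w (y (\<sigma> 3)) (y (\<sigma> 4)) \<longrightarrow>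
        w (y 1) (y 3) + w (y 2) (y 4) = \<infinity> \<or>
        {#y 1, y 3#} = {#y (\<sigma> 1), y (\<sigma> 2)#} \<or>
        {#y 1, y 3#} = {#y (\<sigma> 3), y (\<sigma> 4)#})"

definition cn :: "(real \<Rightarrow> real \<Rightarrow> ereal) \<Rightarrow> real list \<Rightarrow> ereal" where
  "cn w ys = (\<Sum>i<length ys. \<Sum>j<length ys. if i \<noteq> j then w (ys ! i) (ys ! j) else 0)"

definition xsub :: "(nat \<Rightarrow> real) \<Rightarrow> nat set \<Rightarrow> real list" where
  "xsub x B = map x (sorted_list_of_set B)"

end

theory Submission
  imports Defs
begin


definition FF :: "(real \<Rightarrow> real \<Rightarrow> ereal) \<Rightarrow> real multiset \<Rightarrow> ereal" where
  "FF w M = (\<Sum>a\<in>#M. \<Sum>b\<in>#(M - {#a#}). w a b)"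

lemma FF_empty[simp]: "FF w {#} = 0" by (simp add: FF_def)

lemma FF_add:
  "FF w (add_mset y M) = FF w M + (\<Sum>b\<in>#M. w y b) + (\<Sum>b\<in>#M. w b y)"
proof -
  have 1: "image_mset (\<lambda>a. \<Sum>b\<in>#(add_mset y M - {#a#}). w a b) M
         = image_mset (\<lambda>a. w a y + (\<Sum>b\<in>#(M - {#a#}). w a b)) M"
  proof (rule image_mset_cong)
    fix a assume "a \<in># M"
    then obtain M' where M: "M = add_mset a M'" by (metis multi_member_split)
    show "(\<Sum>b\<in>#(add_mset y M - {#a#}). w a b) = w a y + (\<Sum>b\<in>#(M - {#a#}). w a b)"
      using M by (simp add: add_mset_commute)
  qed
  have "FF w (add_mset y M) = (\<Sum>b\<in>#M. w y b) + (\<Sum>a\<in>#M. w a y + (\<Sum>b\<in>#(M - {#a#}). w a b))"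
    unfolding FF_def by (simp add: 1)
  also have "\<dots> = (\<Sum>b\<in>#M. w y b) + ((\<Sum>a\<in>#M. w a y) + FF w M)"
    unfolding FF_def by (simp add: sum_mset.distrib)
  finally show ?thesis by (simp add: ac_simps)
qed

lemma cn_Cons: "cn w (y # ys) = cn w ys + (\<Sum>b\<leftarrow>ys. w y b) + (\<Sum>b\<leftarrow>ys. w b y)"
proof -
  let ?n = "length ys"
  have "cn w (y # ys) = (\<Sum>i<length (y#ys). \<Sum>j<length (y#ys). if i \<noteq> j then w ((y#ys) ! i) ((y#ys) ! j) else 0)"
    by (simp only: cn_def)
  also have "\<dots> = (\<Sum>j<?n. w y (ys ! j)) + ((\<Sum>i<?n. w (ys ! i) y) + cn w ys)"
    by (simp only: length_Cons sum.lessThan_Suc_shift nth_Cons_Suc nth_Cons_0) (simp add: cn_def sum.distrib)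
  also have "(\<Sum>j<?n. w y (ys ! j)) = (\<Sum>b\<leftarrow>ys. w y b)"
    by (simp add: sum_list_sum_nth atLeast0LessThan)
  also have "(\<Sum>i<?n. w (ys ! i) y) = (\<Sum>b\<leftarrow>ys. w b y)"
    by (simp add: sum_list_sum_nth atLeast0LessThan)
  finally show ?thesis by (simp add: ac_simps)
qed

lemma cn_FF: "cn w ys = FF w (mset ys)"
proof (induction ys)
  case Nil
  then show ?case by (simp add: cn_def)
next
  case (Cons y ys)
  have e: "\<And>f. (\<Sum>b\<in>#mset ys. f b) = (\<Sum>b\<leftarrow>ys. f b)"
    by (metis mset_map sum_mset_sum_list)
  show ?case using Cons by (simp add: cn_Cons FF_add e)
qed

definition CC :: "(real \<Rightarrow> real \<Rightarrow> ereal) \<Rightarrow> (nat \<Rightarrow> real) \<Rightarrow> nat set \<Rightarrow> ereal" where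
  "CC w x A = FF w (image_mset x (mset_set A))"

lemma mset_sl: "mset (sorted_list_of_set A) = mset_set A"
  by (metis mset_sorted_list_of_multiset sorted_list_of_mset_set)

lemma cn_xsub: "cn w (xsub x A) = CC w x A"
  by (simp add: xsub_def cn_FF CC_def mset_sl)

lemma sum_mset_image_set: "(\<Sum>b\<in>#image_mset x (mset_set A). g b) = (\<Sum>j\<in>A. g (x j))"
  by (simp add: sum_unfold_sum_mset multiset.map_comp comp_def)

lemma CC_insert:
  assumes sym: "\<forall>a\<in>I. \<forall>b\<in>I. w a b = w b a" and "finite A" "a \<notin> A" "x a \<in> I" "\<forall>j\<in>A. x j \<in> I"
  shows "CC w x (insert a A) = CC w x A + (\<Sum>j\<in>A. w (x a) (x j)) + (\<Sum>j\<in>A. w (x a) (x j))"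
proof -
  have "(\<Sum>j\<in>A. w (x j) (x a)) = (\<Sum>j\<in>A. w (x a) (x j))"
    using assms by (intro sum.cong) auto
  then show ?thesis using assms
    by (simp add: CC_def FF_add sum_mset_image_set)
qed



lemma wo_minf: "well_ordering I w \<Longrightarrow> a \<in> I \<Longrightarrow> b \<in> I \<Longrightarrow> w a b \<noteq> -\<infinity>"
  unfolding well_ordering_def by auto

lemma wo_sym: "well_ordering I w \<Longrightarrow> a \<in> I \<Longrightarrow> b \<in> I \<Longrightarrow> w a b = w b a"
  unfolding well_ordering_def by auto

definition yy :: "real \<Rightarrow> real \<Rightarrow> real \<Rightarrow> real \<Rightarrow> nat \<Rightarrow> real" where
  "yy a b c d k = (if k = 1 then a else if k = 2 then b else if k = 3 then c else d)"

lemma perm24: "Transposition.transpose (2::nat) 4 permutes {1..4}"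
  by (rule permutes_swap_id) auto

lemma fp:
  assumes wo: "well_ordering I w" and I: "a \<in> I" "b \<in> I" "c \<in> I" "d \<in> I"
    and ord: "a \<le> b" "b \<le> c" "c \<le> d"
  shows "w a c + w b d \<le> w a b + w c d" "w a c + w b d \<le> w a d + w b c"
proof -
  let ?y = "yy a b c d"
  let ?f = "\<lambda>\<sigma>. w (?y (\<sigma> 1)) (?y (\<sigma> 2)) + w (?y (\<sigma> 3)) (?y (\<sigma> 4))"
  have H: "\<forall>y::nat \<Rightarrow> real. (\<forall>k\<in>{1..4}. y k \<in> I) \<and> y 1 \<le> y 2 \<and> y 2 \<le> y 3 \<and> y 3 \<le> y 4 \<longrightarrow>
        w (y 1) (y 3) + w (y 2) (y 4) =
        Min ((\<lambda>\<sigma>. w (y (\<sigma> 1)) (y (\<sigma> 2)) + w (y (\<sigma> 3)) (y (\<sigma> 4))) ` {\<sigma>. \<sigma> permutes {1..4::nat}})"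
    using wo unfolding well_ordering_def by blast
  have c: "(\<forall>k\<in>{1..4}. ?y k \<in> I) \<and> ?y 1 \<le> ?y 2 \<and> ?y 2 \<le> ?y 3 \<and> ?y 3 \<le> ?y 4"
    using I ord by (auto simp: yy_def)
  have eq: "w a c + w b d = Min (?f ` {\<sigma>. \<sigma> permutes {1..4::nat}})"
    using H[rule_format, OF c] by (simp add: yy_def)
  have fin: "finite (?f ` {\<sigma>. \<sigma> permutes {1..4::nat}})"
    by (intro finite_imageI finite_permutations) simp
  have "Min (?f ` {\<sigma>. \<sigma> permutes {1..4::nat}}) \<le> ?f id"
    by (rule Min_le[OF fin], rule imageI, rule CollectI, rule permutes_id)
  then show "w a c + w b d \<le> w a b + w c d" using eq by (simp add: yy_def)
  have "Min (?f ` {\<sigma>. \<sigma> permutes {1..4::nat}}) \<le> ?f (Transposition.transpose 2 4)"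
    by (rule Min_le[OF fin], rule imageI) (use perm24 in simp)
  then show "w a c + w b d \<le> w a d + w b c" using eq wo_sym[OF wo I(3) I(2)]
    by (simp add: yy_def Transposition.transpose_def)
qed

lemma mset2_eq: "{#a, c#} = {#e, f#} \<Longrightarrow> (a = e \<and> c = f) \<or> (a = f \<and> c = e)"
  by (auto simp: add_eq_conv_ex)

lemma fp_strict:
  assumes swo: "strictly_well_ordering I w" and I: "a \<in> I" "b \<in> I" "c \<in> I" "d \<in> I"
    and ord: "a \<le> b" "b \<le> c" "c \<le> d"
  shows "w a c + w b d = w a b + w c d \<Longrightarrow> w a c + w b d = \<infinity> \<or> b = c \<or> a = d"
    and "w a c + w b d = w a d + w b c \<Longrightarrow> w a c + w b d = \<infinity> \<or> c = d \<or> a = b"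
proof -
  let ?y = "yy a b c d"
  have wo: "well_ordering I w" using swo unfolding strictly_well_ordering_def by blast
  have H: "\<forall>y::nat \<Rightarrow> real. \<forall>\<sigma>. (\<forall>k\<in>{1..4}. y k \<in> I) \<and> y 1 \<le> y 2 \<and> y 2 \<le> y 3 \<and> y 3 \<le> y 4
        \<and> \<sigma> permutes {1..4::nat}
        \<and> w (y 1) (y 3) + w (y 2) (y 4) = w (y (\<sigma> 1)) (y (\<sigma> 2)) + w (y (\<sigma> 3)) (y (\<sigma> 4)) \<longrightarrow>
        w (y 1) (y 3) + w (y 2) (y 4) = \<infinity> \<or>
        {#y 1, y 3#} = {#y (\<sigma> 1), y (\<sigma> 2)#} \<or>
        {#y 1, y 3#} = {#y (\<sigma> 3), y (\<sigma> 4)#}"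
    using swo unfolding strictly_well_ordering_def by blast
  have c: "(\<forall>k\<in>{1..4}. ?y k \<in> I) \<and> ?y 1 \<le> ?y 2 \<and> ?y 2 \<le> ?y 3 \<and> ?y 3 \<le> ?y 4"
    using I ord by (auto simp: yy_def)
  {
    assume e: "w a c + w b d = w a b + w c d"
    have "w (?y 1) (?y 3) + w (?y 2) (?y 4) = \<infinity> \<or>
        {#?y 1, ?y 3#} = {#?y (id 1), ?y (id 2)#} \<or> {#?y 1, ?y 3#} = {#?y (id 3), ?y (id 4)#}"
      using H[rule_format, of ?y id] c e permutes_id by (simp add: yy_def)
    then show "w a c + w b d = \<infinity> \<or> b = c \<or> a = d"
      by (auto simp: yy_def dest: mset2_eq)
  }
  {
    assume e: "w a c + w b d = w a d + w b c"
    let ?s = "Transposition.transpose (2::nat) 4"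
    have e2: "w (?y 1) (?y 3) + w (?y 2) (?y 4) = w (?y (?s 1)) (?y (?s 2)) + w (?y (?s 3)) (?y (?s 4))"
      using e wo_sym[OF wo I(3) I(2)] by (simp add: yy_def Transposition.transpose_def)
    have "w (?y 1) (?y 3) + w (?y 2) (?y 4) = \<infinity> \<or>
        {#?y 1, ?y 3#} = {#?y (?s 1), ?y (?s 2)#} \<or> {#?y 1, ?y 3#} = {#?y (?s 3), ?y (?s 4)#}"
      using H[rule_format, of ?y ?s] c e2 perm24 by blast
    then show "w a c + w b d = \<infinity> \<or> c = d \<or> a = b"
      by (auto simp: yy_def Transposition.transpose_def dest: mset2_eq)
  }
qed

lemma sum_not_minf: "finite A \<Longrightarrow> (\<forall>i\<in>A. f i \<noteq> -\<infinity>) \<Longrightarrow> sum f A \<noteq> (-\<infinity>::ereal)"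
  by (induction A rule: finite_induct) auto

lemma e_add_strict1:
  fixes a b c d :: ereal
  shows "a \<le> b \<Longrightarrow> c < d \<Longrightarrow> a \<noteq> -\<infinity> \<Longrightarrow> b \<noteq> \<infinity> \<Longrightarrow> a + c < b + d"
  by (cases a; cases b; cases c; cases d) auto

lemma e_add_strict2:
  fixes a b c d :: ereal
  shows "a < b \<Longrightarrow> c \<le> d \<Longrightarrow> c \<noteq> -\<infinity> \<Longrightarrow> d \<noteq> \<infinity> \<Longrightarrow> a + c < b + d"
  by (cases a; cases b; cases c; cases d) auto

lemma e_tight:
  fixes a b c d :: ereal
  shows "a \<le> b \<Longrightarrow> c \<le> d \<Longrightarrow> a + c = b + d \<Longrightarrow> b + d \<noteq> \<infinity> \<Longrightarrow> a \<noteq> -\<infinity> \<Longrightarrow> c \<noteq> -\<infinity> \<Longrightarrow> a = b"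
  by (cases a; cases b; cases c; cases d) auto

lemma e_fin:
  fixes a b :: ereal
  shows "a + b \<noteq> \<infinity> \<Longrightarrow> a \<noteq> -\<infinity> \<Longrightarrow> b \<noteq> -\<infinity> \<Longrightarrow> a \<noteq> \<infinity> \<and> b \<noteq> \<infinity>"
  by (cases a; cases b) auto

lemma e_add_minf: "(a::ereal) \<noteq> -\<infinity> \<Longrightarrow> b \<noteq> -\<infinity> \<Longrightarrow> a + b \<noteq> -\<infinity>"
  by (cases a; cases b) auto



definition cnt :: "nat set \<Rightarrow> nat \<Rightarrow> nat" where
  "cnt Y t = card {i\<in>Y. i < t}"

definition hh :: "nat set \<Rightarrow> nat set \<Rightarrow> nat \<Rightarrow> int" where
  "hh Y Od t = int (cnt (Y \<inter> Od) t) - int (cnt (Y - Od) t)"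

lemma fin_lt: "finite {i\<in>Y. i < (t::nat)}"
  by (rule finite_subset[of _ "{..<t}"]) auto

lemma cnt_0[simp]: "cnt Y 0 = 0"
  by (simp add: cnt_def)

lemma cnt_Suc: "cnt Y (Suc i) = cnt Y i + (if i \<in> Y then 1 else 0)"
proof -
  have "{j\<in>Y. j < Suc i} = (if i \<in> Y then insert i {j\<in>Y. j < i} else {j\<in>Y. j < i})"
    by (auto simp: less_Suc_eq)
  then show ?thesis by (simp add: cnt_def fin_lt)
qed

lemma cnt_const: "t \<le> t' \<Longrightarrow> (\<forall>i\<in>Y. \<not> (t \<le> i \<and> i < t')) \<Longrightarrow> cnt Y t = cnt Y t'"
proof -
  assume a: "t \<le> t'" "\<forall>i\<in>Y. \<not> (t \<le> i \<and> i < t')"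
  then have "{i\<in>Y. i < t} = {i\<in>Y. i < t'}" by (auto simp: not_le)
  then show ?thesis by (simp add: cnt_def)
qed

lemma cnt_big: "(\<forall>i\<in>Y. i < t) \<Longrightarrow> cnt Y t = card Y"
proof -
  assume "\<forall>i\<in>Y. i < t"
  then have "{i\<in>Y. i < t} = Y" by auto
  then show ?thesis by (simp add: cnt_def)
qed

lemma cnt_small: "(\<forall>i\<in>Y. t \<le> i) \<Longrightarrow> cnt Y t = 0"
proof -
  assume "\<forall>i\<in>Y. t \<le> i"
  then have "{i\<in>Y. i < t} = {}" by force
  then show ?thesis by (simp add: cnt_def)
qed

lemma cnt_le_card: "finite Y \<Longrightarrow> cnt Y t \<le> card Y"
  unfolding cnt_def by (rule card_mono) auto

lemma cnt_mono: "t \<le> t' \<Longrightarrow> cnt Y t \<le> cnt Y t'"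
  unfolding cnt_def by (rule card_mono[OF fin_lt]) auto

lemma cnt_interval: "a \<le> b \<Longrightarrow> card {i\<in>Y. a \<le> i \<and> i < b} = cnt Y b - cnt Y a"
proof -
  assume ab: "a \<le> b"
  have "{i\<in>Y. a \<le> i \<and> i < b} = {i\<in>Y. i < b} - {i\<in>Y. i < a}" by auto
  moreover have "{i\<in>Y. i < a} \<subseteq> {i\<in>Y. i < b}" using ab by auto
  ultimately show ?thesis by (simp add: cnt_def card_Diff_subset fin_lt)
qed

lemma cnt_ge: "finite Y \<Longrightarrow> card {i\<in>Y. a \<le> i} = card Y - cnt Y a"
proof -
  assume f: "finite Y"
  have "{i\<in>Y. a \<le> i} = Y - {i\<in>Y. i < a}" by auto
  then show ?thesis by (simp add: cnt_def card_Diff_subset fin_lt f)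
qed

lemma hh_0[simp]: "hh Y Od 0 = 0"
  by (simp add: hh_def)

lemma hh_Suc: "hh Y Od (Suc i) = hh Y Od i + (if i \<in> Y then (if i \<in> Od then 1 else -1) else 0)"
  by (simp add: hh_def cnt_Suc)

lemma hh_const: "t \<le> t' \<Longrightarrow> (\<forall>i\<in>Y. \<not> (t \<le> i \<and> i < t')) \<Longrightarrow> hh Y Od t = hh Y Od t'"
  unfolding hh_def by (subst (1 2) cnt_const[of t t']) auto

lemma hh_big: "(\<forall>i\<in>Y. i < t) \<Longrightarrow> hh Y Od t = int (card (Y \<inter> Od)) - int (card (Y - Od))"
  unfolding hh_def by (subst (1 2) cnt_big) auto

lemma hh_small: "(\<forall>i\<in>Y. t \<le> i) \<Longrightarrow> hh Y Od t = 0"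
  unfolding hh_def by (subst (1 2) cnt_small) auto

lemma cnt_diff_sub: "D \<subseteq> S \<Longrightarrow> cnt (S - D) t = cnt S t - cnt D t \<and> cnt D t \<le> cnt S t"
proof -
  assume DS: "D \<subseteq> S"
  have "{i\<in>S - D. i < t} = {i\<in>S. i < t} - {i\<in>D. i < t}" by auto
  moreover have "{i\<in>D. i < t} \<subseteq> {i\<in>S. i < t}" using DS by auto
  ultimately show ?thesis unfolding cnt_def by (simp add: card_Diff_subset fin_lt card_mono)
qed

lemma hh_compl: "D \<subseteq> S \<Longrightarrow> hh (S - D) Od t = hh S Od t - hh D Od t"
proof -
  assume DS: "D \<subseteq> S"
  have 1: "(S - D) \<inter> Od = (S \<inter> Od) - (D \<inter> Od)" "(S - D) - Od = (S - Od) - (D - Od)" by auto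
  have a: "cnt ((S \<inter> Od) - (D \<inter> Od)) t = cnt (S \<inter> Od) t - cnt (D \<inter> Od) t \<and> cnt (D \<inter> Od) t \<le> cnt (S \<inter> Od) t"
    by (rule cnt_diff_sub) (use DS in auto)
  have b: "cnt ((S - Od) - (D - Od)) t = cnt (S - Od) t - cnt (D - Od) t \<and> cnt (D - Od) t \<le> cnt (S - Od) t"
    by (rule cnt_diff_sub) (use DS in auto)
  show ?thesis unfolding hh_def 1 using a b by auto
qed

lemma ex_min_int:
  fixes f :: "nat \<Rightarrow> int"
  assumes "\<forall>t\<ge>N. f t = f N"
  shows "\<exists>t0. \<forall>t. f t0 \<le> f t"
proof -
  have fin: "finite (f ` {..N})" "f ` {..N} \<noteq> {}" by auto
  have "Min (f ` {..N}) \<in> f ` {..N}" using Min_in[OF fin] .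
  then obtain t0 where t0: "t0 \<in> {..N}" "f t0 = Min (f ` {..N})"
    by (metis imageE)
  have "f t0 \<le> f t" for t
  proof (cases "t \<le> N")
    case True
    then have "Min (f ` {..N}) \<le> f t" using fin by (intro Min_le) auto
    then show ?thesis using t0 by simp
  next
    case False
    then have "f t = f N" by (intro assms[rule_format]) simp
    moreover have "Min (f ` {..N}) \<le> f N" using fin by (intro Min_le) auto
    ultimately show ?thesis using t0 by simp
  qed
  then show ?thesis by blast
qed

lemma ex_max_int:
  fixes f :: "nat \<Rightarrow> int"
  assumes "\<forall>t\<ge>N. f t = f N"
  shows "\<exists>t0. \<forall>t. f t \<le> f t0"
proof -
  have "\<forall>t\<ge>N. (\<lambda>t. - f t) t = (\<lambda>t. - f t) N"
  proof (intro allI impI)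
    fix t assume "N \<le> t"
    then have "f t = f N" by (intro assms[rule_format])
    then show "(\<lambda>t. - f t) t = (\<lambda>t. - f t) N" by simp
  qed
  from ex_min_int[OF this] obtain t0 where "\<forall>t. - f t0 \<le> - f t" by blast
  then have "\<forall>t. f t \<le> f t0" by simp
  then show ?thesis by blast
qed

lemma interior_pq:
  fixes S :: "nat set"
  assumes fin: "finite S" and "\<exists>i\<in>S. i < t" and "\<exists>i\<in>S. t \<le> i"
  obtains p q where "p \<in> S" "q \<in> S" "p < t" "t \<le> q" "\<forall>i\<in>S. i < t \<longrightarrow> i \<le> p" "\<forall>i\<in>S. t \<le> i \<longrightarrow> q \<le> i"
proof -
  let ?L = "{i\<in>S. i < t}" and ?R = "{i\<in>S. t \<le> i}"
  have fL: "finite ?L" "?L \<noteq> {}" and fR: "finite ?R" "?R \<noteq> {}" using assms by auto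
  have "Max ?L \<in> ?L" "Min ?R \<in> ?R" using Max_in[OF fL] Min_in[OF fR] by blast+
  moreover have "\<forall>i\<in>S. i < t \<longrightarrow> i \<le> Max ?L" using fL by (simp add: Max_ge)
  moreover have "\<forall>i\<in>S. t \<le> i \<longrightarrow> Min ?R \<le> i" using fR by (simp add: Min_le)
  ultimately show ?thesis by (intro that[of "Max ?L" "Min ?R"]) auto
qed



lemma block_sets:
  fixes S X :: "nat set"
  assumes "p < q" and consec: "\<forall>i\<in>S. \<not> (p < i \<and> i < q)"
  shows "t \<le> p \<Longrightarrow> {i\<in>(S - {p,q}) \<inter> X. i < t} = {i\<in>S \<inter> X. i < t}"
    and "p < t \<Longrightarrow> t \<le> q \<Longrightarrow> {i\<in>(S - {p,q}) \<inter> X. i < t} = {i\<in>S \<inter> X. i < p}"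
    and "q < t \<Longrightarrow> p \<in> S \<Longrightarrow> q \<in> S \<Longrightarrow>
           {i\<in>S \<inter> X. i < t} = {i\<in>(S - {p,q}) \<inter> X. i < t} \<union> ({p,q} \<inter> X)"
  using assms by (auto simp: not_less)

lemma hh_remove_block:
  fixes S :: "nat set"
  assumes pS: "p \<in> S" and qS: "q \<in> S" and pq: "p < q" and consec: "\<forall>i\<in>S. \<not> (p < i \<and> i < q)"
    and pO: "p \<in> Od \<longleftrightarrow> q \<notin> Od"
  shows "hh (S - {p,q}) Od t = (if t \<le> p then hh S Od t else if t \<le> q then hh S Od p else hh S Od t)"
proof -
  have D1: "(S - {p,q}) - Od = (S - {p,q}) \<inter> (- Od)" "S - Od = S \<inter> (- Od)" by auto
  consider "t \<le> p" | "p < t" "t \<le> q" | "q < t" by linarith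
  then show ?thesis
  proof cases
    case 1
    then show ?thesis unfolding hh_def cnt_def D1
      using block_sets(1)[OF pq consec 1, of Od] block_sets(1)[OF pq consec 1, of "-Od"] by simp
  next
    case 2
    then show ?thesis unfolding hh_def cnt_def D1
      using block_sets(2)[OF pq consec 2, of Od] block_sets(2)[OF pq consec 2, of "-Od"] by simp
  next
    case 3
    have a: "{i\<in>S \<inter> Od. i < t} = {i\<in>(S - {p,q}) \<inter> Od. i < t} \<union> ({p,q} \<inter> Od)"
      using block_sets(3)[OF pq consec 3 pS qS] .
    have b: "{i\<in>S \<inter> -Od. i < t} = {i\<in>(S - {p,q}) \<inter> -Od. i < t} \<union> ({p,q} \<inter> -Od)"
      using block_sets(3)[OF pq consec 3 pS qS] .
    have c1: "card ({p,q} \<inter> Od) = 1" "card ({p,q} \<inter> -Od) = 1"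
      using pO pq by (cases "p \<in> Od"; auto)+
    have "card {i\<in>S \<inter> Od. i < t} = card {i\<in>(S - {p,q}) \<inter> Od. i < t} + 1"
      unfolding a by (subst card_Un_disjoint) (auto simp: fin_lt c1)
    moreover have "card {i\<in>S \<inter> -Od. i < t} = card {i\<in>(S - {p,q}) \<inter> -Od. i < t} + 1"
      unfolding b by (subst card_Un_disjoint) (auto simp: fin_lt c1)
    ultimately show ?thesis using 3 pq unfolding hh_def cnt_def D1 by simp
  qed
qed

lemma hh_restrict: "Y \<inter> Z = {} \<Longrightarrow> hh Y (Od - Z) t = hh Y Od t"
proof -
  assume "Y \<inter> Z = {}"
  then have "Y \<inter> (Od - Z) = Y \<inter> Od" "Y - (Od - Z) = Y - Od" by auto
  then show ?thesis by (simp add: hh_def)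
qed

lemma alt_remove:
  fixes S :: "nat set"
  assumes pS: "p \<in> S" and qS: "q \<in> S" and pq: "p < q" and consec: "\<forall>i\<in>S. \<not> (p < i \<and> i < q)"
    and pO: "p \<in> Od \<longleftrightarrow> q \<notin> Od" and alt: "\<forall>t. hh S Od t = 0 \<or> hh S Od t = 1"
  shows "\<forall>t. hh (S - {p,q}) (Od - {p,q}) t = 0 \<or> hh (S - {p,q}) (Od - {p,q}) t = 1"
    and "hh (S - {p,q}) (Od - {p,q}) p = hh S Od p"
  using hh_remove_block[OF assms(1-5)] alt hh_restrict[of "S - {p,q}" "{p,q}" Od] by auto



lemma notout:
  fixes S :: "nat set"
  assumes "\<not> ((\<forall>i\<in>S. t \<le> i) \<or> (\<forall>i\<in>S. i < t))"
  shows "(\<exists>i\<in>S. i < t) \<and> (\<exists>i\<in>S. t \<le> i)"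
proof -
  have a: "\<not> (\<forall>i\<in>S. t \<le> i)" "\<not> (\<forall>i\<in>S. i < t)" using assms by auto
  from a(1) have "\<exists>i\<in>S. i < t" by (auto simp: not_le)
  moreover from a(2) have "\<exists>i\<in>S. t \<le> i" by (auto simp: not_less)
  ultimately show ?thesis by blast
qed

lemma block_exists:
  fixes S D Od :: "nat set"
  assumes fin: "finite S" and OS: "Od \<subseteq> S" and alt: "\<forall>t. hh S Od t = 0 \<or> hh S Od t = 1"
    and cardS: "card S = 2 * card Od" and DS: "D \<subseteq> S" and Dne: "D \<noteq> {}"
    and Dbal: "card (D \<inter> Od) = card (D - Od)"
  shows "\<exists>p q Y. p \<in> S \<and> q \<in> S \<and> p < q \<and> (\<forall>i\<in>S. \<not> (p < i \<and> i < q)) \<and> (p \<in> Od \<longleftrightarrow> q \<notin> Od)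
     \<and> (Y = D \<or> Y = S - D) \<and> p \<notin> Y \<and> q \<notin> Y
     \<and> (if p \<in> Od then (\<forall>t. hh Y Od p \<le> hh Y Od t) else (\<forall>t. hh Y Od t \<le> hh Y Od p))"
proof -
  define f where "f = hh D Od"
  define g where "g = hh S Od"
  have fD: "finite D" using fin DS finite_subset by blast
  have fS: "f (Suc i) = f i + (if i \<in> D then (if i \<in> Od then 1 else -1) else 0)" for i
    unfolding f_def by (rule hh_Suc)
  have gS: "g (Suc i) = g i + (if i \<in> S then (if i \<in> Od then 1 else -1) else 0)" for i
    unfolding g_def by (rule hh_Suc)
  have g01: "g t = 0 \<or> g t = 1" for t using alt g_def by simp
  have hY: "hh (S - D) Od t = g t - f t" for t
    unfolding f_def g_def by (rule hh_compl[OF DS])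
  have cSO: "card (S - Od) = card Od"
    using cardS OS fin by (simp add: card_Diff_subset finite_subset)
  have SOd: "S \<inter> Od = Od" using OS by auto
  have f_out: "f t = 0" if "(\<forall>i\<in>S. t \<le> i) \<or> (\<forall>i\<in>S. i < t)" for t
    using that
  proof
    assume "\<forall>i\<in>S. t \<le> i" then show ?thesis unfolding f_def using DS by (intro hh_small) auto
  next
    assume "\<forall>i\<in>S. i < t" then show ?thesis unfolding f_def using DS Dbal by (subst hh_big) auto
  qed
  have g_small: "g t = 0" if "\<forall>i\<in>S. t \<le> i" for t
    unfolding g_def using that by (intro hh_small) auto
  have g_big: "g t = 0" if "\<forall>i\<in>S. i < t" for t
    unfolding g_def using that cSO SOd by (subst hh_big) auto
  have Sne: "S \<noteq> {}" using Dne DS by auto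
  define N where "N = Suc (Max S)"
  have N: "\<forall>i\<in>S. i < t" if "N \<le> t" for t
  proof
    fix i assume "i \<in> S"
    then have "i \<le> Max S" using fin by simp
    then show "i < t" using that unfolding N_def by simp
  qed
  have fN: "\<forall>t\<ge>N. f t = f N" using f_out N by auto
  obtain t0 where t0: "\<forall>t. f t0 \<le> f t" using ex_min_int[OF fN] by blast
  have blk: "\<exists>p q. p \<in> S \<and> q \<in> S \<and> p < q \<and> (\<forall>i\<in>S. \<not> (p < i \<and> i < q))
      \<and> f (Suc p) = f t \<and> g (Suc p) = g t \<and> f q = f t \<and> g q = g t
      \<and> hh (S - D) Od (Suc p) = hh (S - D) Od t"
    if int1: "\<exists>i\<in>S. i < t" and int2: "\<exists>i\<in>S. t \<le> i" for t
  proof -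
    obtain p q where pq: "p \<in> S" "q \<in> S" "p < t" "t \<le> q" "\<forall>i\<in>S. i < t \<longrightarrow> i \<le> p"
      "\<forall>i\<in>S. t \<le> i \<longrightarrow> q \<le> i"
      using interior_pq[OF fin int1 int2] by blast
    have nb1: "\<forall>i\<in>Y. \<not> (Suc p \<le> i \<and> i < t)" if "Y \<subseteq> S" for Y
    proof (intro ballI notI)
      fix i assume i: "i \<in> Y" "Suc p \<le> i \<and> i < t"
      then have "i \<le> p" using pq(5) that by blast
      then show False using i by simp
    qed
    have nb2: "\<forall>i\<in>Y. \<not> (t \<le> i \<and> i < q)" if "Y \<subseteq> S" for Y
    proof (intro ballI notI)
      fix i assume i: "i \<in> Y" "t \<le> i \<and> i < q"
      then have "q \<le> i" using pq(6) that by blast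
      then show False using i by simp
    qed
    have "f (Suc p) = f t" unfolding f_def using pq DS by (intro hh_const nb1) auto
    moreover have "g (Suc p) = g t" unfolding g_def using pq by (intro hh_const nb1) auto
    moreover have "f q = f t" unfolding f_def using pq DS by (intro hh_const[symmetric] nb2) auto
    moreover have "g q = g t" unfolding g_def using pq by (intro hh_const[symmetric] nb2) auto
    moreover have "hh (S - D) Od (Suc p) = hh (S - D) Od t" using pq by (intro hh_const nb1) auto
    moreover have "\<forall>i\<in>S. \<not> (p < i \<and> i < q)"
    proof (intro ballI notI)
      fix i assume i: "i \<in> S" "p < i \<and> i < q"
      show False
      proof (cases "i < t")
        case True then show False using pq(5) i by fastforce
      next
        case False then show False using pq(6) i by fastforce
      qed
    qed
    moreover have "p < q" using pq by simp
    ultimately show ?thesis using pq(1,2) by blast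
  qed
  have int_of_g1: "(\<exists>i\<in>S. i < t) \<and> (\<exists>i\<in>S. t \<le> i)" if "g t = 1" for t
  proof -
    have a: "\<not> (\<forall>i\<in>S. t \<le> i)" using that g_small by fastforce
    have b: "\<not> (\<forall>i\<in>S. i < t)" using that g_big by fastforce
    from a have "\<exists>i\<in>S. i < t" by (auto simp: not_le)
    moreover from b have "\<exists>i\<in>S. t \<le> i" by (auto simp: not_less)
    ultimately show ?thesis by blast
  qed
  let ?goal = "\<exists>p q Y. p \<in> S \<and> q \<in> S \<and> p < q \<and> (\<forall>i\<in>S. \<not> (p < i \<and> i < q)) \<and> (p \<in> Od \<longleftrightarrow> q \<notin> Od)
     \<and> (Y = D \<or> Y = S - D) \<and> p \<notin> Y \<and> q \<notin> Y
     \<and> (if p \<in> Od then (\<forall>t. hh Y Od p \<le> hh Y Od t) else (\<forall>t. hh Y Od t \<le> hh Y Od p))"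
  show ?goal
  proof (cases "\<exists>t. f t = f t0 \<and> g t = 1")
    case True
    then obtain t where t: "f t = f t0" "g t = 1" by blast
    obtain p q where pq: "p \<in> S" "q \<in> S" "p < q" "\<forall>i\<in>S. \<not> (p < i \<and> i < q)"
      "f (Suc p) = f t" "g (Suc p) = g t" "f q = f t" "g q = g t"
      using blk[OF conjunct1[OF int_of_g1[OF t(2)]] conjunct2[OF int_of_g1[OF t(2)]]] by blast
    have pO: "p \<in> Od" using gS[of p] g01[of p] pq t by (auto split: if_splits)
    have qO: "q \<notin> Od" using gS[of q] g01[of "Suc q"] pq t by (auto split: if_splits)
    have pD: "p \<notin> D" using fS[of p] t0[rule_format, of p] pq t pO by (auto split: if_splits)
    have qD: "q \<notin> D" using fS[of q] t0[rule_format, of "Suc q"] pq t qO by (auto split: if_splits)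
    have "\<forall>t'. hh D Od p \<le> hh D Od t'"
      using t0 fS[of p] pD pq t unfolding f_def by (auto split: if_splits)
    then show ?thesis using pq pO qO pD qD by (intro exI[of _ p] exI[of _ q] exI[of _ D]) auto
  next
    case notA: False
    show ?thesis
    proof (cases "\<exists>t. f t = f t0 \<and> (\<exists>i\<in>S. i < t) \<and> (\<exists>i\<in>S. t \<le> i)")
      case True
      then obtain t where t: "f t = f t0" "\<exists>i\<in>S. i < t" "\<exists>i\<in>S. t \<le> i" by blast
      have gt: "g t = 0" using notA t g01 by blast
      obtain p q where pq: "p \<in> S" "q \<in> S" "p < q" "\<forall>i\<in>S. \<not> (p < i \<and> i < q)"
        "f (Suc p) = f t" "g (Suc p) = g t" "f q = f t" "g q = g t"
        using blk[OF t(2,3)] by blast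
      have pO: "p \<notin> Od" using gS[of p] g01[of p] pq gt by (auto split: if_splits)
      have gp: "g p = 1" using gS[of p] pq gt pO by auto
      have qO: "q \<in> Od" using gS[of q] g01[of "Suc q"] pq gt by (auto split: if_splits)
      have pD: "p \<in> D"
      proof (rule ccontr)
        assume "p \<notin> D"
        then have "f p = f t0" using fS[of p] pq t by auto
        then show False using notA gp by blast
      qed
      have qD: "q \<in> D"
      proof (rule ccontr)
        assume "q \<notin> D"
        then have "f (Suc q) = f t0" "g (Suc q) = 1" using fS[of q] gS[of q] pq t gt qO by auto
        then show False using notA by blast
      qed
      have fp: "f p = f t0 + 1" using fS[of p] pD pO pq t by auto
      have "\<forall>t'. hh (S - D) Od t' \<le> hh (S - D) Od p"
      proof
        fix t'
        show "hh (S - D) Od t' \<le> hh (S - D) Od p"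
        proof (cases "g t' = 1")
          case True
          then have "f t' \<noteq> f t0" using notA by blast
          then show ?thesis using hY t0[rule_format, of t'] fp gp True by auto
        next
          case False
          then have "g t' = 0" using g01 by blast
          then show ?thesis using hY t0[rule_format, of t'] fp gp by auto
        qed
      qed
      then show ?thesis using pq pO qO pD qD
        by (intro exI[of _ p] exI[of _ q] exI[of _ "S - D"]) auto
    next
      case notB: False
      have ft0: "f t0 = 0"
      proof (rule ccontr)
        assume ne: "f t0 \<noteq> 0"
        then have "(\<exists>i\<in>S. i < t0) \<and> (\<exists>i\<in>S. t0 \<le> i)" using f_out[of t0] by (intro notout) blast
        then show False using notB by blast
      qed
      have fint: "f t \<ge> 1" if "\<exists>i\<in>S. i < t" "\<exists>i\<in>S. t \<le> i" for t
      proof -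
        have "f t \<noteq> f t0" using notB that by blast
        then show ?thesis using t0[rule_format, of t] ft0 by auto
      qed
      obtain t1 where t1: "\<forall>t. f t \<le> f t1" using ex_max_int[OF fN] by blast
      have cD: "card D = card (D \<inter> Od) + card (D - Od)"
        using fD by (rule card_Int_Diff)
      have "card D > 0" using Dne fD by (simp add: card_gt_0_iff)
      then have "card (D \<inter> Od) > 0" "card (D - Od) > 0" using cD Dbal by auto
      then obtain d1 d2 where d1: "d1 \<in> D \<inter> Od" and d2: "d2 \<in> D - Od"
        by (auto simp: card_gt_0_iff)
      have ne12: "d1 \<noteq> d2" using d1 d2 by auto
      have i1: "min d1 d2 \<in> S" "max d1 d2 \<in> S" using d1 d2 DS by (auto simp: min_def max_def)
      have i2: "min d1 d2 < Suc (min d1 d2)" "Suc (min d1 d2) \<le> max d1 d2"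
        using ne12 by (auto simp: min_def max_def)
      have "f (Suc (min d1 d2)) \<ge> 1"
        by (rule fint) (use i1 i2 in blast)+
      then have ft1: "f t1 \<ge> 1" using t1 by (meson order_trans)
      have t1int: "(\<exists>i\<in>S. i < t1) \<and> (\<exists>i\<in>S. t1 \<le> i)"
        using f_out[of t1] ft1 by (intro notout) auto
      show ?thesis
      proof (cases "\<exists>t. f t = f t1 \<and> g t = 0")
        case True
        then obtain t where t: "f t = f t1" "g t = 0" by blast
        have tint: "(\<exists>i\<in>S. i < t) \<and> (\<exists>i\<in>S. t \<le> i)"
          using f_out[of t] ft1 t by (intro notout) auto
        obtain p q where pq: "p \<in> S" "q \<in> S" "p < q" "\<forall>i\<in>S. \<not> (p < i \<and> i < q)"
          "f (Suc p) = f t" "g (Suc p) = g t" "f q = f t" "g q = g t"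
          using blk[OF conjunct1[OF tint] conjunct2[OF tint]] by blast
        have pO: "p \<notin> Od" using gS[of p] g01[of p] pq t by (auto split: if_splits)
        have qO: "q \<in> Od" using gS[of q] g01[of "Suc q"] pq t by (auto split: if_splits)
        have pD: "p \<notin> D" using fS[of p] t1[rule_format, of p] pq t pO by (auto split: if_splits)
        have qD: "q \<notin> D" using fS[of q] t1[rule_format, of "Suc q"] pq t qO by (auto split: if_splits)
        have "\<forall>t'. hh D Od t' \<le> hh D Od p"
          using t1 fS[of p] pD pq t unfolding f_def by (auto split: if_splits)
        then show ?thesis using pq pO qO pD qD by (intro exI[of _ p] exI[of _ q] exI[of _ D]) auto
      next
        case notC1: False
        have gt1: "g t1 = 1" using notC1 g01 by blast
        obtain p q where pq: "p \<in> S" "q \<in> S" "p < q" "\<forall>i\<in>S. \<not> (p < i \<and> i < q)"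
          "f (Suc p) = f t1" "g (Suc p) = g t1" "f q = f t1" "g q = g t1"
          using blk[OF conjunct1[OF t1int] conjunct2[OF t1int]] by blast
        have pO: "p \<in> Od" using gS[of p] g01[of p] pq gt1 by (auto split: if_splits)
        have gp: "g p = 0" using gS[of p] pq gt1 pO by auto
        have qO: "q \<notin> Od" using gS[of q] g01[of "Suc q"] pq gt1 by (auto split: if_splits)
        have pD: "p \<in> D"
        proof (rule ccontr)
          assume "p \<notin> D"
          then have "f p = f t1" using fS[of p] pq by auto
          then show False using notC1 gp by blast
        qed
        have qD: "q \<in> D"
        proof (rule ccontr)
          assume "q \<notin> D"
          then have "f (Suc q) = f t1" "g (Suc q) = 0" using fS[of q] gS[of q] pq gt1 qO by auto
          then show False using notC1 by blast
        qed
        have fp: "f p = f t1 - 1" using fS[of p] pD pO pq by auto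
        have "\<forall>t'. hh (S - D) Od p \<le> hh (S - D) Od t'"
        proof
          fix t'
          show "hh (S - D) Od p \<le> hh (S - D) Od t'"
          proof (cases "g t' = 0")
            case True
            then have "f t' \<noteq> f t1" using notC1 by blast
            then show ?thesis using hY t1[rule_format, of t'] fp gp True by auto
          next
            case False
            then have "g t' = 1" using g01 by blast
            then show ?thesis using hY t1[rule_format, of t'] fp gp by auto
          qed
        qed
        then show ?thesis using pq pO qO pD qD
          by (intro exI[of _ p] exI[of _ q] exI[of _ "S - D"]) auto
      qed
    qed
  qed
qed



lemma exchange:
  fixes U V :: "nat set" and \<kappa> :: "nat \<Rightarrow> int" and F G :: "nat \<Rightarrow> ereal" and x :: "nat \<Rightarrow> real"
  assumes "finite U" "finite V" "card U = card V"
    and "\<forall>v\<in>V. card {v'\<in>V. \<kappa> v' \<le> \<kappa> v} \<le> card {u\<in>U. \<kappa> u < \<kappa> v}"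
    and "\<forall>u\<in>U. \<forall>v\<in>V. \<kappa> u < \<kappa> v \<longrightarrow> F u + G v \<le> F v + G u"
    and "\<forall>i\<in>U \<union> V. F i \<noteq> -\<infinity> \<and> G i \<noteq> -\<infinity>"
  shows "sum F U + sum G V \<le> sum F V + sum G U \<and>
    ((\<forall>u\<in>U. \<forall>v\<in>V. \<kappa> u < \<kappa> v \<longrightarrow> x u \<noteq> x v \<longrightarrow> F u + G v < F v + G u \<or> F v + G u = \<infinity>) \<longrightarrow>
     image_mset x (mset_set U) \<noteq> image_mset x (mset_set V) \<longrightarrow> sum F V + sum G U \<noteq> \<infinity> \<longrightarrow>
     sum F U + sum G V < sum F V + sum G U)"
  using assms
proof (induction "card V" arbitrary: U V)
  case 0
  then have "V = {}" "U = {}" by auto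
  then show ?case by simp
next
  case (Suc n)
  note fU = Suc.prems(1) and fV = Suc.prems(2) and cUV = Suc.prems(3)
    and ballot = Suc.prems(4) and pair = Suc.prems(5) and nm = Suc.prems(6)
  have Vne: "V \<noteq> {}" using Suc.hyps(2) by auto
  have "Min (\<kappa> ` V) \<in> \<kappa> ` V" using fV Vne by simp
  then obtain v0 where v0: "v0 \<in> V" "\<kappa> v0 = Min (\<kappa> ` V)" by auto
  have v0min: "\<forall>v\<in>V. \<kappa> v0 \<le> \<kappa> v" using v0 fV by simp
  have "v0 \<in> {v'\<in>V. \<kappa> v' \<le> \<kappa> v0}" using v0 by simp
  moreover have "finite {v'\<in>V. \<kappa> v' \<le> \<kappa> v0}" using fV by simp
  ultimately have "card {v'\<in>V. \<kappa> v' \<le> \<kappa> v0} > 0" using card_gt_0_iff by blast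
  then have "card {v'\<in>V. \<kappa> v' \<le> \<kappa> v0} \<ge> 1" by simp
  then have c1: "card {u\<in>U. \<kappa> u < \<kappa> v0} \<ge> 1" using ballot v0 by (meson order_trans)
  have "{u\<in>U. \<kappa> u < \<kappa> v0} \<noteq> {}"
  proof
    assume "{u\<in>U. \<kappa> u < \<kappa> v0} = {}"
    with c1 show False by simp
  qed
  then obtain u0 where u0: "u0 \<in> U" "\<kappa> u0 < \<kappa> v0" by auto
  define U1 where "U1 = U - {u0}"
  define V1 where "V1 = V - {v0}"
  have fU1: "finite U1" and fV1: "finite V1" using fU fV by (auto simp: U1_def V1_def)
  have cV1: "n = card V1" using Suc.hyps(2) v0 fV by (simp add: V1_def)
  have cU1: "card U1 = card V1" using cUV u0 v0 fU fV by (simp add: U1_def V1_def)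
  have ballot1: "\<forall>v\<in>V1. card {v'\<in>V1. \<kappa> v' \<le> \<kappa> v} \<le> card {u\<in>U1. \<kappa> u < \<kappa> v}"
  proof
    fix v assume v: "v \<in> V1"
    then have vV: "v \<in> V" by (simp add: V1_def)
    have e1: "{v'\<in>V1. \<kappa> v' \<le> \<kappa> v} = {v'\<in>V. \<kappa> v' \<le> \<kappa> v} - {v0}" by (auto simp: V1_def)
    have e2: "{u\<in>U1. \<kappa> u < \<kappa> v} = {u\<in>U. \<kappa> u < \<kappa> v} - {u0}" by (auto simp: U1_def)
    have "v0 \<in> {v'\<in>V. \<kappa> v' \<le> \<kappa> v}" using v0 v0min vV by auto
    then have c1: "card {v'\<in>V1. \<kappa> v' \<le> \<kappa> v} = card {v'\<in>V. \<kappa> v' \<le> \<kappa> v} - 1"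
      unfolding e1 using fV by (simp add: card_Diff_singleton)
    have c2: "card {u\<in>U1. \<kappa> u < \<kappa> v} \<ge> card {u\<in>U. \<kappa> u < \<kappa> v} - 1"
      unfolding e2 using fU by (simp add: card_Diff_singleton_if)
    show "card {v'\<in>V1. \<kappa> v' \<le> \<kappa> v} \<le> card {u\<in>U1. \<kappa> u < \<kappa> v}"
      using c1 c2 ballot[rule_format, OF vV] by linarith
  qed
  have pair1: "\<forall>u\<in>U1. \<forall>v\<in>V1. \<kappa> u < \<kappa> v \<longrightarrow> F u + G v \<le> F v + G u"
    using pair by (auto simp: U1_def V1_def)
  have nm1: "\<forall>i\<in>U1 \<union> V1. F i \<noteq> -\<infinity> \<and> G i \<noteq> -\<infinity>" using nm by (auto simp: U1_def V1_def)
  have IH: "sum F U1 + sum G V1 \<le> sum F V1 + sum G U1 \<and>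
    ((\<forall>u\<in>U1. \<forall>v\<in>V1. \<kappa> u < \<kappa> v \<longrightarrow> x u \<noteq> x v \<longrightarrow> F u + G v < F v + G u \<or> F v + G u = \<infinity>) \<longrightarrow>
     image_mset x (mset_set U1) \<noteq> image_mset x (mset_set V1) \<longrightarrow> sum F V1 + sum G U1 \<noteq> \<infinity> \<longrightarrow>
     sum F U1 + sum G V1 < sum F V1 + sum G U1)"
    using Suc.hyps(1)[OF cV1 fU1 fV1 cU1 ballot1 pair1 nm1] .
  have sU: "sum F U = F u0 + sum F U1" "sum G U = G u0 + sum G U1"
    using fU u0 by (auto simp: U1_def sum.remove)
  have sV: "sum F V = F v0 + sum F V1" "sum G V = G v0 + sum G V1"
    using fV v0 by (auto simp: V1_def sum.remove)
  have L: "sum F U + sum G V = (F u0 + G v0) + (sum F U1 + sum G V1)" using sU sV by (simp add: ac_simps)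
  have R: "sum F V + sum G U = (F v0 + G u0) + (sum F V1 + sum G U1)" using sU sV by (simp add: ac_simps)
  have p0: "F u0 + G v0 \<le> F v0 + G u0" using pair u0 v0 by blast
  have part1: "sum F U + sum G V \<le> sum F V + sum G U"
    unfolding L R using p0 conjunct1[OF IH] by (rule add_mono)
  have nm0: "F u0 \<noteq> -\<infinity>" "G u0 \<noteq> -\<infinity>" "F v0 \<noteq> -\<infinity>" "G v0 \<noteq> -\<infinity>" using nm u0 v0 by auto
  have nmR: "sum F V1 + sum G U1 \<noteq> -\<infinity>" "sum F U1 + sum G V1 \<noteq> -\<infinity>"
  proof -
    have a: "sum F V1 \<noteq> -\<infinity>" "sum G U1 \<noteq> -\<infinity>" "sum F U1 \<noteq> -\<infinity>" "sum G V1 \<noteq> -\<infinity>"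
      by (rule sum_not_minf; use nm1 fU1 fV1 in auto)+
    show "sum F V1 + sum G U1 \<noteq> -\<infinity>" "sum F U1 + sum G V1 \<noteq> -\<infinity>"
      using a by (auto intro!: e_add_minf)
  qed
  have part2: "sum F U + sum G V < sum F V + sum G U"
    if sp: "\<forall>u\<in>U. \<forall>v\<in>V. \<kappa> u < \<kappa> v \<longrightarrow> x u \<noteq> x v \<longrightarrow> F u + G v < F v + G u \<or> F v + G u = \<infinity>"
      and ms: "image_mset x (mset_set U) \<noteq> image_mset x (mset_set V)"
      and fin: "sum F V + sum G U \<noteq> \<infinity>"
  proof -
    have fin2: "F v0 + G u0 \<noteq> \<infinity>" "sum F V1 + sum G U1 \<noteq> \<infinity>"
      using e_fin[of "F v0 + G u0" "sum F V1 + sum G U1"] fin nmR nm0 e_add_minf unfolding R by auto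
    show ?thesis
    proof (cases "x u0 = x v0")
      case True
      have mU: "image_mset x (mset_set U) = add_mset (x u0) (image_mset x (mset_set U1))"
        using fU u0 by (simp add: U1_def mset_set.remove)
      have mV: "image_mset x (mset_set V) = add_mset (x v0) (image_mset x (mset_set V1))"
        using fV v0 by (simp add: V1_def mset_set.remove)
      have "image_mset x (mset_set U1) \<noteq> image_mset x (mset_set V1)"
        using ms True mU mV by auto
      moreover have "\<forall>u\<in>U1. \<forall>v\<in>V1. \<kappa> u < \<kappa> v \<longrightarrow> x u \<noteq> x v \<longrightarrow> F u + G v < F v + G u \<or> F v + G u = \<infinity>"
        using sp by (auto simp: U1_def V1_def)
      ultimately have "sum F U1 + sum G V1 < sum F V1 + sum G U1" using IH fin2 by blast
      then show ?thesis unfolding L R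
        by (rule e_add_strict1[OF p0 _ e_add_minf[OF nm0(1) nm0(4)] fin2(1)])
    next
      case False
      then have "F u0 + G v0 < F v0 + G u0" using sp u0 v0 fin2 by blast
      then show ?thesis unfolding L R
        by (rule e_add_strict2[OF _ conjunct1[OF IH] nmR(2) fin2(2)])
    qed
  qed
  show ?case using part1 part2 by blast
qed



lemma pair_from:
  fixes T P :: ereal
  assumes "T \<le> P" "T = P \<Longrightarrow> T = \<infinity> \<or> Q1 \<or> Q2" "\<not> Q1" "\<not> Q2"
  shows "T < P \<or> P = \<infinity>"
  using assms by (cases "T = P") (auto simp: order_less_le)

lemma cross_oe:
  fixes S Y Od :: "nat set" and x :: "nat \<Rightarrow> real"
  assumes wo: "well_ordering I w" and fin: "finite S" and xI: "\<forall>i\<in>S. x i \<in> I"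
    and mono: "\<forall>i\<in>S. \<forall>j\<in>S. i \<le> j \<longrightarrow> x i \<le> x j"
    and pS: "p \<in> S" and qS: "q \<in> S" and pq: "p < q" and consec: "\<forall>i\<in>S. \<not> (p < i \<and> i < q)"
    and YS: "Y \<subseteq> S" and pY: "p \<notin> Y" and qY: "q \<notin> Y"
    and bal: "card (Y \<inter> Od) = card (Y - Od)"
    and ext: "\<forall>t. hh Y Od p \<le> hh Y Od t"
  shows "(\<Sum>u\<in>Y \<inter> Od. w (x p) (x u)) + (\<Sum>v\<in>Y - Od. w (x q) (x v))
          \<le> (\<Sum>v\<in>Y - Od. w (x p) (x v)) + (\<Sum>u\<in>Y \<inter> Od. w (x q) (x u)) \<and>
    (strictly_well_ordering I w \<longrightarrow> x p \<noteq> x q \<longrightarrow>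
      image_mset x (mset_set (Y \<inter> Od)) \<noteq> image_mset x (mset_set (Y - Od)) \<longrightarrow>
      (\<Sum>v\<in>Y - Od. w (x p) (x v)) + (\<Sum>u\<in>Y \<inter> Od. w (x q) (x u)) \<noteq> \<infinity> \<longrightarrow>
      (\<Sum>u\<in>Y \<inter> Od. w (x p) (x u)) + (\<Sum>v\<in>Y - Od. w (x q) (x v))
          < (\<Sum>v\<in>Y - Od. w (x p) (x v)) + (\<Sum>u\<in>Y \<inter> Od. w (x q) (x u)))"
proof -
  define U where "U = Y \<inter> Od"
  define V where "V = Y - Od"
  define B where "B = int (Max S) + 1"
  define \<kappa> where "\<kappa> = (\<lambda>i. if i < p then int i + B else int i)"
  have fY: "finite Y" using fin YS finite_subset by blast
  have fU: "finite U" and fV: "finite V" using fY by (auto simp: U_def V_def)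
  have UV: "U \<inter> V = {}" by (auto simp: U_def V_def)
  have side: "\<forall>y\<in>Y. y < p \<or> q < y"
  proof
    fix y assume "y \<in> Y"
    then have "y \<in> S" "y \<noteq> p" "y \<noteq> q" using YS pY qY by auto
    then show "y < p \<or> q < y" using consec by (meson linorder_neqE_nat)
  qed
  have Bbig: "int i < B" if "i \<in> S" for i
    using that fin unfolding B_def by simp
  have hdef: "hh Y Od t = int (cnt U t) - int (cnt V t)" for t by (simp add: hh_def U_def V_def)
  have cUV: "card U = card V" using bal by (simp add: U_def V_def)
  have cUle: "cnt U t \<le> card U" "cnt V t \<le> card V" for t using fU fV by (auto intro: cnt_le_card)
  have ballot: "\<forall>v\<in>V. card {v'\<in>V. \<kappa> v' \<le> \<kappa> v} \<le> card {u\<in>U. \<kappa> u < \<kappa> v}"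
  proof
    fix v assume vV: "v \<in> V"
    have vY: "v \<in> Y" "v \<notin> U" using vV by (auto simp: U_def V_def)
    have hp: "hh Y Od p \<le> hh Y Od (Suc v)" using ext by blast
    have cUs: "cnt U (Suc v) = cnt U v" using vY by (simp add: cnt_Suc)
    show "card {v'\<in>V. \<kappa> v' \<le> \<kappa> v} \<le> card {u\<in>U. \<kappa> u < \<kappa> v}"
    proof (cases "v < p")
      case False
      then have vq: "q < v" using side vY by auto
      have s1: "{v'\<in>V. \<kappa> v' \<le> \<kappa> v} = {v'\<in>V. p \<le> v' \<and> v' < Suc v}"
      proof -
        have "\<kappa> v' \<le> \<kappa> v \<longleftrightarrow> p \<le> v' \<and> v' < Suc v" if "v' \<in> V" for v'
          using that False Bbig[of v'] Bbig[of v] vY YS unfolding \<kappa>_def V_def by auto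
        then show ?thesis by auto
      qed
      have s2: "{u\<in>U. \<kappa> u < \<kappa> v} = {u\<in>U. p \<le> u \<and> u < v}"
      proof -
        have "\<kappa> u < \<kappa> v \<longleftrightarrow> p \<le> u \<and> u < v" if "u \<in> U" for u
          using that False Bbig[of u] Bbig[of v] vY YS unfolding \<kappa>_def U_def by auto
        then show ?thesis by auto
      qed
      have c1: "card {v'\<in>V. \<kappa> v' \<le> \<kappa> v} = cnt V (Suc v) - cnt V p"
        unfolding s1 using False by (intro cnt_interval) simp
      have c2: "card {u\<in>U. \<kappa> u < \<kappa> v} = cnt U v - cnt U p"
        unfolding s2 using False by (intro cnt_interval) simp
      have m1: "cnt V p \<le> cnt V (Suc v)" "cnt U p \<le> cnt U v" using False by (auto intro: cnt_mono)
      show ?thesis unfolding c1 c2 using hp m1 cUs unfolding hdef by linarith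
    next
      case True
      have s1: "{v'\<in>V. \<kappa> v' \<le> \<kappa> v} = {v'\<in>V. p \<le> v'} \<union> {v'\<in>V. v' < Suc v}"
      proof -
        have "\<kappa> v' \<le> \<kappa> v \<longleftrightarrow> p \<le> v' \<or> v' < Suc v" if "v' \<in> V" for v'
          using that True Bbig[of v'] Bbig[of v] vY YS unfolding \<kappa>_def V_def by auto
        then show ?thesis by auto
      qed
      have s2: "{u\<in>U. \<kappa> u < \<kappa> v} = {u\<in>U. p \<le> u} \<union> {u\<in>U. u < v}"
      proof -
        have "\<kappa> u < \<kappa> v \<longleftrightarrow> p \<le> u \<or> u < v" if "u \<in> U" for u
          using that True Bbig[of u] Bbig[of v] vY YS unfolding \<kappa>_def U_def by auto
        then show ?thesis by auto
      qed
      have c1: "card {v'\<in>V. \<kappa> v' \<le> \<kappa> v} = (card V - cnt V p) + cnt V (Suc v)"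
        unfolding s1 using True fV by (subst card_Un_disjoint) (auto simp: cnt_ge cnt_def)
      have c2: "card {u\<in>U. \<kappa> u < \<kappa> v} = (card U - cnt U p) + cnt U v"
        unfolding s2 using True fU by (subst card_Un_disjoint) (auto simp: cnt_ge cnt_def)
      show ?thesis unfolding c1 c2 using hp cUs cUV cUle[of p] cUle[of v] cUle[of "Suc v"] unfolding hdef
        by linarith
    qed
  qed
  have xS: "\<And>i. i \<in> Y \<Longrightarrow> i \<in> S" using YS by auto
  have mo: "\<And>i j. i \<in> S \<Longrightarrow> j \<in> S \<Longrightarrow> i \<le> j \<Longrightarrow> x i \<le> x j" using mono by blast
  have sy: "\<And>i j. i \<in> S \<Longrightarrow> j \<in> S \<Longrightarrow> w (x i) (x j) = w (x j) (x i)"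
    using wo_sym[OF wo] xI by blast
  have conf: "w (x p) (x u) + w (x q) (x v) \<le> w (x p) (x v) + w (x q) (x u) \<and>
     (strictly_well_ordering I w \<longrightarrow> x p \<noteq> x q \<longrightarrow> x u \<noteq> x v \<longrightarrow>
       w (x p) (x u) + w (x q) (x v) < w (x p) (x v) + w (x q) (x u) \<or> w (x p) (x v) + w (x q) (x u) = \<infinity>)"
    if uU: "u \<in> U" and vV: "v \<in> V" and k: "\<kappa> u < \<kappa> v" for u v
  proof -
    have uS: "u \<in> S" and vS: "v \<in> S" using uU vV YS by (auto simp: U_def V_def)
    have uside: "u < p \<or> q < u" and vside: "v < p \<or> q < v" using side uU vV by (auto simp: U_def V_def)
    have I4: "x u \<in> I" "x v \<in> I" "x p \<in> I" "x q \<in> I" using xI uS vS pS qS by auto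
    consider (c1) "u < v" "v < p" | (c2) "v < p" "q < u" | (c3) "q < u" "u < v"
    proof -
      have "\<not> (u < p \<and> q < v)" using k Bbig[OF uS] Bbig[OF vS] pq unfolding \<kappa>_def by auto
      moreover have "u < p \<Longrightarrow> v < p \<Longrightarrow> u < v" using k unfolding \<kappa>_def by auto
      moreover have "q < u \<Longrightarrow> q < v \<Longrightarrow> u < v" using k pq unfolding \<kappa>_def by auto
      ultimately show ?thesis using that uside vside by blast
    qed
    then show ?thesis
    proof cases
      case c1
      have o: "x u \<le> x v" "x v \<le> x p" "x p \<le> x q" using c1 pq mo uS vS pS qS by auto
      have "w (x u) (x p) + w (x v) (x q) \<le> w (x u) (x q) + w (x v) (x p)"
        using fp(2)[OF wo I4(1,2,3,4) o] .
      then have A: "w (x p) (x u) + w (x q) (x v) \<le> w (x p) (x v) + w (x q) (x u)"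
        using sy[OF uS pS] sy[OF vS qS] sy[OF uS qS] sy[OF vS pS] by (simp add: ac_simps)
      have "strictly_well_ordering I w \<Longrightarrow> x p \<noteq> x q \<Longrightarrow> x u \<noteq> x v \<Longrightarrow>
         w (x p) (x u) + w (x q) (x v) < w (x p) (x v) + w (x q) (x u) \<or> w (x p) (x v) + w (x q) (x u) = \<infinity>"
      proof -
        assume swo: "strictly_well_ordering I w" and n1: "x p \<noteq> x q" and n2: "x u \<noteq> x v"
        show ?thesis
        proof (rule pair_from[OF A _ n1 n2])
          assume "w (x p) (x u) + w (x q) (x v) = w (x p) (x v) + w (x q) (x u)"
          then have "w (x u) (x p) + w (x v) (x q) = w (x u) (x q) + w (x v) (x p)"
            using sy[OF uS pS] sy[OF vS qS] sy[OF uS qS] sy[OF vS pS] by (simp add: ac_simps)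
          from fp_strict(2)[OF swo I4(1,2,3,4) o this]
          show "w (x p) (x u) + w (x q) (x v) = \<infinity> \<or> x p = x q \<or> x u = x v"
            using sy[OF uS pS] sy[OF vS qS] by (auto simp: ac_simps)
        qed
      qed
      then show ?thesis using A by blast
    next
      case c2
      have o: "x v \<le> x p" "x p \<le> x q" "x q \<le> x u" using c2 pq mo uS vS pS qS by auto
      have "w (x v) (x q) + w (x p) (x u) \<le> w (x v) (x p) + w (x q) (x u)"
        using fp(1)[OF wo I4(2,3,4,1) o] .
      then have A: "w (x p) (x u) + w (x q) (x v) \<le> w (x p) (x v) + w (x q) (x u)"
        using sy[OF vS qS] sy[OF vS pS] by (simp add: ac_simps)
      have "strictly_well_ordering I w \<Longrightarrow> x p \<noteq> x q \<Longrightarrow> x u \<noteq> x v \<Longrightarrow>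
         w (x p) (x u) + w (x q) (x v) < w (x p) (x v) + w (x q) (x u) \<or> w (x p) (x v) + w (x q) (x u) = \<infinity>"
      proof -
        assume swo: "strictly_well_ordering I w" and n1: "x p \<noteq> x q" and n2: "x u \<noteq> x v"
        show ?thesis
        proof (rule pair_from[OF A _ n1 n2])
          assume "w (x p) (x u) + w (x q) (x v) = w (x p) (x v) + w (x q) (x u)"
          then have "w (x v) (x q) + w (x p) (x u) = w (x v) (x p) + w (x q) (x u)"
            using sy[OF vS qS] sy[OF vS pS] by (simp add: ac_simps)
          from fp_strict(1)[OF swo I4(2,3,4,1) o this]
          show "w (x p) (x u) + w (x q) (x v) = \<infinity> \<or> x p = x q \<or> x u = x v"
            using sy[OF vS qS] by (auto simp: ac_simps)
        qed
      qed
      then show ?thesis using A by blast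
    next
      case c3
      have o: "x p \<le> x q" "x q \<le> x u" "x u \<le> x v" using c3 pq mo uS vS pS qS by auto
      have A: "w (x p) (x u) + w (x q) (x v) \<le> w (x p) (x v) + w (x q) (x u)"
        using fp(2)[OF wo I4(3,4,1,2) o] .
      have "strictly_well_ordering I w \<Longrightarrow> x p \<noteq> x q \<Longrightarrow> x u \<noteq> x v \<Longrightarrow>
         w (x p) (x u) + w (x q) (x v) < w (x p) (x v) + w (x q) (x u) \<or> w (x p) (x v) + w (x q) (x u) = \<infinity>"
      proof -
        assume swo: "strictly_well_ordering I w" and n1: "x p \<noteq> x q" and n2: "x u \<noteq> x v"
        show ?thesis
        proof (rule pair_from[OF A _ n1 n2])
          assume "w (x p) (x u) + w (x q) (x v) = w (x p) (x v) + w (x q) (x u)"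
          from fp_strict(2)[OF swo I4(3,4,1,2) o this]
          show "w (x p) (x u) + w (x q) (x v) = \<infinity> \<or> x p = x q \<or> x u = x v" by auto
        qed
      qed
      then show ?thesis using A by blast
    qed
  qed
  have nm: "\<forall>i\<in>U \<union> V. w (x p) (x i) \<noteq> -\<infinity> \<and> w (x q) (x i) \<noteq> -\<infinity>"
    using wo_minf[OF wo] xI pS qS YS by (auto simp: U_def V_def)
  have E: "sum (\<lambda>i. w (x p) (x i)) U + sum (\<lambda>i. w (x q) (x i)) V \<le> sum (\<lambda>i. w (x p) (x i)) V + sum (\<lambda>i. w (x q) (x i)) U \<and>
    ((\<forall>u\<in>U. \<forall>v\<in>V. \<kappa> u < \<kappa> v \<longrightarrow> x u \<noteq> x v \<longrightarrow> w (x p) (x u) + w (x q) (x v) < w (x p) (x v) + w (x q) (x u) \<or> w (x p) (x v) + w (x q) (x u) = \<infinity>) \<longrightarrow>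
     image_mset x (mset_set U) \<noteq> image_mset x (mset_set V) \<longrightarrow> sum (\<lambda>i. w (x p) (x i)) V + sum (\<lambda>i. w (x q) (x i)) U \<noteq> \<infinity> \<longrightarrow>
     sum (\<lambda>i. w (x p) (x i)) U + sum (\<lambda>i. w (x q) (x i)) V < sum (\<lambda>i. w (x p) (x i)) V + sum (\<lambda>i. w (x q) (x i)) U)"
    by (rule exchange[OF fU fV cUV ballot]) (use conf nm in blast)+
  show ?thesis using E conf unfolding U_def V_def by blast
qed



lemma cross_eo:
  fixes S Y Od :: "nat set" and x :: "nat \<Rightarrow> real"
  assumes wo: "well_ordering I w" and fin: "finite S" and xI: "\<forall>i\<in>S. x i \<in> I"
    and mono: "\<forall>i\<in>S. \<forall>j\<in>S. i \<le> j \<longrightarrow> x i \<le> x j"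
    and pS: "p \<in> S" and qS: "q \<in> S" and pq: "p < q" and consec: "\<forall>i\<in>S. \<not> (p < i \<and> i < q)"
    and YS: "Y \<subseteq> S" and pY: "p \<notin> Y" and qY: "q \<notin> Y"
    and bal: "card (Y \<inter> Od) = card (Y - Od)"
    and ext: "\<forall>t. hh Y Od t \<le> hh Y Od p"
  shows "(\<Sum>u\<in>Y \<inter> Od. w (x q) (x u)) + (\<Sum>v\<in>Y - Od. w (x p) (x v))
          \<le> (\<Sum>v\<in>Y - Od. w (x q) (x v)) + (\<Sum>u\<in>Y \<inter> Od. w (x p) (x u)) \<and>
    (strictly_well_ordering I w \<longrightarrow> x q \<noteq> x p \<longrightarrow>
      image_mset x (mset_set (Y \<inter> Od)) \<noteq> image_mset x (mset_set (Y - Od)) \<longrightarrow>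
      (\<Sum>v\<in>Y - Od. w (x q) (x v)) + (\<Sum>u\<in>Y \<inter> Od. w (x p) (x u)) \<noteq> \<infinity> \<longrightarrow>
      (\<Sum>u\<in>Y \<inter> Od. w (x q) (x u)) + (\<Sum>v\<in>Y - Od. w (x p) (x v))
          < (\<Sum>v\<in>Y - Od. w (x q) (x v)) + (\<Sum>u\<in>Y \<inter> Od. w (x p) (x u)))"
proof -
  define U where "U = Y \<inter> Od"
  define V where "V = Y - Od"
  define B where "B = int (Max S) + 1"
  define \<kappa> where "\<kappa> = (\<lambda>i. if i < p then B - int i else 3 * B - int i)"
  have fY: "finite Y" using fin YS finite_subset by blast
  have fU: "finite U" and fV: "finite V" using fY by (auto simp: U_def V_def)
  have side: "\<forall>y\<in>Y. y < p \<or> q < y"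
  proof
    fix y assume "y \<in> Y"
    then have "y \<in> S" "y \<noteq> p" "y \<noteq> q" using YS pY qY by auto
    then show "y < p \<or> q < y" using consec by (meson linorder_neqE_nat)
  qed
  have Bbig: "int i < B" if "i \<in> S" for i
    using that fin unfolding B_def by simp
  have Bpos: "B > 0" unfolding B_def by simp
  have hdef: "hh Y Od t = int (cnt U t) - int (cnt V t)" for t by (simp add: hh_def U_def V_def)
  have cUV: "card U = card V" using bal by (simp add: U_def V_def)
  have cUle: "cnt U t \<le> card U" "cnt V t \<le> card V" for t using fU fV by (auto intro: cnt_le_card)
  have ballot: "\<forall>v\<in>V. card {v'\<in>V. \<kappa> v' \<le> \<kappa> v} \<le> card {u\<in>U. \<kappa> u < \<kappa> v}"
  proof
    fix v assume vV: "v \<in> V"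
    have vY: "v \<in> Y" "v \<notin> U" using vV by (auto simp: U_def V_def)
    have hp: "hh Y Od v \<le> hh Y Od p" using ext by blast
    have cUs: "cnt U (Suc v) = cnt U v" using vY by (simp add: cnt_Suc)
    show "card {v'\<in>V. \<kappa> v' \<le> \<kappa> v} \<le> card {u\<in>U. \<kappa> u < \<kappa> v}"
    proof (cases "v < p")
      case True
      have s1: "{v'\<in>V. \<kappa> v' \<le> \<kappa> v} = {v'\<in>V. v \<le> v' \<and> v' < p}"
      proof -
        have "\<kappa> v' \<le> \<kappa> v \<longleftrightarrow> v \<le> v' \<and> v' < p" if "v' \<in> V" for v'
          using that True Bbig[of v'] Bbig[of v] vY YS unfolding \<kappa>_def V_def by auto
        then show ?thesis by auto
      qed
      have s2: "{u\<in>U. \<kappa> u < \<kappa> v} = {u\<in>U. Suc v \<le> u \<and> u < p}"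
      proof -
        have "\<kappa> u < \<kappa> v \<longleftrightarrow> Suc v \<le> u \<and> u < p" if "u \<in> U" for u
          using that True Bbig[of u] Bbig[of v] vY YS unfolding \<kappa>_def U_def by auto
        then show ?thesis by auto
      qed
      have c1: "card {v'\<in>V. \<kappa> v' \<le> \<kappa> v} = cnt V p - cnt V v"
        unfolding s1 using True by (intro cnt_interval) simp
      have c2: "card {u\<in>U. \<kappa> u < \<kappa> v} = cnt U p - cnt U (Suc v)"
        unfolding s2 using True by (intro cnt_interval) simp
      have m1: "cnt V v \<le> cnt V p" "cnt U (Suc v) \<le> cnt U p" using True by (auto intro: cnt_mono)
      show ?thesis unfolding c1 c2 using hp m1 cUs unfolding hdef by linarith
    next
      case False
      then have vq: "q < v" using side vY by auto
      have s1: "{v'\<in>V. \<kappa> v' \<le> \<kappa> v} = {v'\<in>V. v' < p} \<union> {v'\<in>V. v \<le> v'}"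
      proof -
        have "\<kappa> v' \<le> \<kappa> v \<longleftrightarrow> v' < p \<or> v \<le> v'" if "v' \<in> V" for v'
          using that False Bbig[of v'] Bbig[of v] vY YS unfolding \<kappa>_def V_def by auto
        then show ?thesis by auto
      qed
      have s2: "{u\<in>U. \<kappa> u < \<kappa> v} = {u\<in>U. u < p} \<union> {u\<in>U. Suc v \<le> u}"
      proof -
        have "\<kappa> u < \<kappa> v \<longleftrightarrow> u < p \<or> Suc v \<le> u" if "u \<in> U" for u
          using that False Bbig[of u] Bbig[of v] vY YS unfolding \<kappa>_def U_def by auto
        then show ?thesis by auto
      qed
      have c1: "card {v'\<in>V. \<kappa> v' \<le> \<kappa> v} = cnt V p + (card V - cnt V v)"
        unfolding s1 using False fV by (subst card_Un_disjoint) (auto simp: cnt_ge cnt_def)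
      have c2: "card {u\<in>U. \<kappa> u < \<kappa> v} = cnt U p + (card U - cnt U (Suc v))"
        unfolding s2 using False fU by (subst card_Un_disjoint) (auto simp: cnt_ge cnt_def)
      show ?thesis unfolding c1 c2 using hp cUs cUV cUle[of p] cUle[of v] cUle[of "Suc v"] unfolding hdef
        by linarith
    qed
  qed
  have mo: "\<And>i j. i \<in> S \<Longrightarrow> j \<in> S \<Longrightarrow> i \<le> j \<Longrightarrow> x i \<le> x j" using mono by blast
  have sy: "\<And>i j. i \<in> S \<Longrightarrow> j \<in> S \<Longrightarrow> w (x i) (x j) = w (x j) (x i)"
    using wo_sym[OF wo] xI by blast
  have conf: "w (x q) (x u) + w (x p) (x v) \<le> w (x q) (x v) + w (x p) (x u) \<and>
     (strictly_well_ordering I w \<longrightarrow> x q \<noteq> x p \<longrightarrow> x u \<noteq> x v \<longrightarrow>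
       w (x q) (x u) + w (x p) (x v) < w (x q) (x v) + w (x p) (x u) \<or> w (x q) (x v) + w (x p) (x u) = \<infinity>)"
    if uU: "u \<in> U" and vV: "v \<in> V" and k: "\<kappa> u < \<kappa> v" for u v
  proof -
    have uS: "u \<in> S" and vS: "v \<in> S" using uU vV YS by (auto simp: U_def V_def)
    have uside: "u < p \<or> q < u" and vside: "v < p \<or> q < v" using side uU vV by (auto simp: U_def V_def)
    have I4: "x u \<in> I" "x v \<in> I" "x p \<in> I" "x q \<in> I" using xI uS vS pS qS by auto
    consider (c1) "v < u" "u < p" | (c2) "u < p" "q < v" | (c3) "q < v" "v < u"
    proof -
      have "\<not> (q < u \<and> v < p)" using k Bbig[OF uS] Bbig[OF vS] pq Bpos unfolding \<kappa>_def by auto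
      moreover have "u < p \<Longrightarrow> v < p \<Longrightarrow> v < u" using k unfolding \<kappa>_def by auto
      moreover have "q < u \<Longrightarrow> q < v \<Longrightarrow> v < u" using k pq unfolding \<kappa>_def by auto
      ultimately show ?thesis using that uside vside by blast
    qed
    then show ?thesis
    proof cases
      case c1
      have o: "x v \<le> x u" "x u \<le> x p" "x p \<le> x q" using c1 pq mo uS vS pS qS by auto
      have "w (x v) (x p) + w (x u) (x q) \<le> w (x v) (x q) + w (x u) (x p)"
        using fp(2)[OF wo I4(2,1,3,4) o] .
      then have A: "w (x q) (x u) + w (x p) (x v) \<le> w (x q) (x v) + w (x p) (x u)"
        using sy[OF uS pS] sy[OF vS qS] sy[OF uS qS] sy[OF vS pS] by (simp add: ac_simps)
      have "strictly_well_ordering I w \<Longrightarrow> x q \<noteq> x p \<Longrightarrow> x u \<noteq> x v \<Longrightarrow>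
         w (x q) (x u) + w (x p) (x v) < w (x q) (x v) + w (x p) (x u) \<or> w (x q) (x v) + w (x p) (x u) = \<infinity>"
      proof -
        assume swo: "strictly_well_ordering I w" and n1: "x q \<noteq> x p" and n2: "x u \<noteq> x v"
        show ?thesis
        proof (rule pair_from[OF A _ n1 n2])
          assume "w (x q) (x u) + w (x p) (x v) = w (x q) (x v) + w (x p) (x u)"
          then have "w (x v) (x p) + w (x u) (x q) = w (x v) (x q) + w (x u) (x p)"
            using sy[OF uS pS] sy[OF vS qS] sy[OF uS qS] sy[OF vS pS] by (simp add: ac_simps)
          from fp_strict(2)[OF swo I4(2,1,3,4) o this]
          show "w (x q) (x u) + w (x p) (x v) = \<infinity> \<or> x q = x p \<or> x u = x v"
            using sy[OF vS pS] sy[OF uS qS] by (auto simp: ac_simps)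
        qed
      qed
      then show ?thesis using A by blast
    next
      case c2
      have o: "x u \<le> x p" "x p \<le> x q" "x q \<le> x v" using c2 pq mo uS vS pS qS by auto
      have "w (x u) (x q) + w (x p) (x v) \<le> w (x u) (x p) + w (x q) (x v)"
        using fp(1)[OF wo I4(1,3,4,2) o] .
      then have A: "w (x q) (x u) + w (x p) (x v) \<le> w (x q) (x v) + w (x p) (x u)"
        using sy[OF uS qS] sy[OF uS pS] by (simp add: ac_simps)
      have "strictly_well_ordering I w \<Longrightarrow> x q \<noteq> x p \<Longrightarrow> x u \<noteq> x v \<Longrightarrow>
         w (x q) (x u) + w (x p) (x v) < w (x q) (x v) + w (x p) (x u) \<or> w (x q) (x v) + w (x p) (x u) = \<infinity>"
      proof -
        assume swo: "strictly_well_ordering I w" and n1: "x q \<noteq> x p" and n2: "x u \<noteq> x v"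
        show ?thesis
        proof (rule pair_from[OF A _ n1 n2])
          assume "w (x q) (x u) + w (x p) (x v) = w (x q) (x v) + w (x p) (x u)"
          then have "w (x u) (x q) + w (x p) (x v) = w (x u) (x p) + w (x q) (x v)"
            using sy[OF uS qS] sy[OF uS pS] by (simp add: ac_simps)
          from fp_strict(1)[OF swo I4(1,3,4,2) o this]
          show "w (x q) (x u) + w (x p) (x v) = \<infinity> \<or> x q = x p \<or> x u = x v"
            using sy[OF uS qS] by (auto simp: ac_simps)
        qed
      qed
      then show ?thesis using A by blast
    next
      case c3
      have o: "x p \<le> x q" "x q \<le> x v" "x v \<le> x u" using c3 pq mo uS vS pS qS by auto
      have "w (x p) (x v) + w (x q) (x u) \<le> w (x p) (x u) + w (x q) (x v)"
        using fp(2)[OF wo I4(3,4,2,1) o] .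
      then have A: "w (x q) (x u) + w (x p) (x v) \<le> w (x q) (x v) + w (x p) (x u)"
        by (simp add: ac_simps)
      have "strictly_well_ordering I w \<Longrightarrow> x q \<noteq> x p \<Longrightarrow> x u \<noteq> x v \<Longrightarrow>
         w (x q) (x u) + w (x p) (x v) < w (x q) (x v) + w (x p) (x u) \<or> w (x q) (x v) + w (x p) (x u) = \<infinity>"
      proof -
        assume swo: "strictly_well_ordering I w" and n1: "x q \<noteq> x p" and n2: "x u \<noteq> x v"
        show ?thesis
        proof (rule pair_from[OF A _ n1 n2])
          assume "w (x q) (x u) + w (x p) (x v) = w (x q) (x v) + w (x p) (x u)"
          then have "w (x p) (x v) + w (x q) (x u) = w (x p) (x u) + w (x q) (x v)"
            by (simp add: ac_simps)
          from fp_strict(2)[OF swo I4(3,4,2,1) o this]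
          show "w (x q) (x u) + w (x p) (x v) = \<infinity> \<or> x q = x p \<or> x u = x v"
            by (auto simp: ac_simps)
        qed
      qed
      then show ?thesis using A by blast
    qed
  qed
  have nm: "\<forall>i\<in>U \<union> V. w (x q) (x i) \<noteq> -\<infinity> \<and> w (x p) (x i) \<noteq> -\<infinity>"
    using wo_minf[OF wo] xI pS qS YS by (auto simp: U_def V_def)
  have E: "sum (\<lambda>i. w (x q) (x i)) U + sum (\<lambda>i. w (x p) (x i)) V \<le> sum (\<lambda>i. w (x q) (x i)) V + sum (\<lambda>i. w (x p) (x i)) U \<and>
    ((\<forall>u\<in>U. \<forall>v\<in>V. \<kappa> u < \<kappa> v \<longrightarrow> x u \<noteq> x v \<longrightarrow> w (x q) (x u) + w (x p) (x v) < w (x q) (x v) + w (x p) (x u) \<or> w (x q) (x v) + w (x p) (x u) = \<infinity>) \<longrightarrow>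
     image_mset x (mset_set U) \<noteq> image_mset x (mset_set V) \<longrightarrow> sum (\<lambda>i. w (x q) (x i)) V + sum (\<lambda>i. w (x p) (x i)) U \<noteq> \<infinity> \<longrightarrow>
     sum (\<lambda>i. w (x q) (x i)) U + sum (\<lambda>i. w (x p) (x i)) V < sum (\<lambda>i. w (x q) (x i)) V + sum (\<lambda>i. w (x p) (x i)) U)"
    by (rule exchange[OF fU fV cUV ballot]) (use conf nm in blast)+
  show ?thesis using E conf unfolding U_def V_def by blast
qed



definition Cost :: "(real \<Rightarrow> real \<Rightarrow> ereal) \<Rightarrow> (nat \<Rightarrow> real) \<Rightarrow> nat set \<Rightarrow> nat set \<Rightarrow> ereal" where
  "Cost w x S A = CC w x A + CC w x (S - A)"

lemma CC_not_minf:
  assumes wo: "well_ordering I w" and "finite A" and "\<forall>i\<in>A. x i \<in> I"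
  shows "CC w x A \<noteq> -\<infinity>"
  using assms(2,3)
proof (induction A rule: finite_induct)
  case empty
  then show ?case by (simp add: CC_def)
next
  case (insert a A)
  have s: "(\<Sum>j\<in>A. w (x a) (x j)) \<noteq> -\<infinity>"
    using insert wo_minf[OF wo] by (intro sum_not_minf) auto
  have "CC w x (insert a A) = CC w x A + (\<Sum>j\<in>A. w (x a) (x j)) + (\<Sum>j\<in>A. w (x a) (x j))"
    using insert wo_sym[OF wo] by (intro CC_insert[of I]) auto
  then show ?case using insert s by (simp add: e_add_minf)
qed

lemma Cost_not_minf:
  assumes wo: "well_ordering I w" and "finite S" and "\<forall>i\<in>S. x i \<in> I" and "A \<subseteq> S"
  shows "Cost w x S A \<noteq> -\<infinity>"
proof -
  have fA: "finite A" using assms finite_subset by blast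
  have "CC w x A \<noteq> -\<infinity>" by (rule CC_not_minf[OF wo fA]) (use assms in auto)
  moreover have "CC w x (S - A) \<noteq> -\<infinity>" by (rule CC_not_minf[OF wo]) (use assms in auto)
  ultimately show ?thesis unfolding Cost_def by (rule e_add_minf)
qed

lemma cost_split:
  assumes wo: "well_ordering I w" and fin: "finite S" and xI: "\<forall>i\<in>S. x i \<in> I"
    and AS: "A \<subseteq> S" and aA: "a \<in> A" and bS: "b \<in> S" and bA: "b \<notin> A"
  shows "Cost w x S A = Cost w x (S - {a,b}) (A - {a,b})
     + ((\<Sum>j\<in>A - {a,b}. w (x a) (x j)) + (\<Sum>j\<in>(S - {a,b}) - (A - {a,b}). w (x b) (x j)))
     + ((\<Sum>j\<in>A - {a,b}. w (x a) (x j)) + (\<Sum>j\<in>(S - {a,b}) - (A - {a,b}). w (x b) (x j)))"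
proof -
  have sym: "\<forall>u\<in>I. \<forall>v\<in>I. w u v = w v u" using wo_sym[OF wo] by blast
  have fA: "finite A" using fin AS finite_subset by blast
  have e1: "A = insert a (A - {a,b})" using aA bA by auto
  have e2: "S - A = insert b ((S - {a,b}) - (A - {a,b}))" using bS bA aA by auto
  have c1: "CC w x A = CC w x (A - {a,b}) + (\<Sum>j\<in>A - {a,b}. w (x a) (x j)) + (\<Sum>j\<in>A - {a,b}. w (x a) (x j))"
    by (subst e1, rule CC_insert[OF sym]) (use fA xI AS aA in auto)
  have c2: "CC w x (S - A) = CC w x ((S - {a,b}) - (A - {a,b})) + (\<Sum>j\<in>(S - {a,b}) - (A - {a,b}). w (x b) (x j))
       + (\<Sum>j\<in>(S - {a,b}) - (A - {a,b}). w (x b) (x j))"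
    by (subst e2, rule CC_insert[OF sym]) (use fin xI bS in auto)
  show ?thesis unfolding Cost_def c1 c2 by (simp add: ac_simps)
qed

lemma split_sums:
  fixes F G :: "nat \<Rightarrow> ereal"
  assumes fin: "finite S" and OS: "Od \<subseteq> S" and AS: "A \<subseteq> S"
  shows "(\<Sum>j\<in>Od. F j) + (\<Sum>j\<in>S - Od. G j)
       = ((\<Sum>j\<in>A \<inter> Od. F j) + (\<Sum>j\<in>S - Od - A. G j)) + ((\<Sum>j\<in>Od - A. F j) + (\<Sum>j\<in>A - Od. G j))"
    and "(\<Sum>j\<in>A. F j) + (\<Sum>j\<in>S - A. G j)
       = ((\<Sum>j\<in>A \<inter> Od. F j) + (\<Sum>j\<in>S - Od - A. G j)) + ((\<Sum>j\<in>A - Od. F j) + (\<Sum>j\<in>Od - A. G j))"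
proof -
  have fO: "finite Od" and fA: "finite A" using fin OS AS finite_subset by blast+
  have a1: "(\<Sum>j\<in>Od. F j) = (\<Sum>j\<in>Od \<inter> A. F j) + (\<Sum>j\<in>Od - A. F j)" using fO by (rule sum.Int_Diff)
  have a2: "(\<Sum>j\<in>S - Od. G j) = (\<Sum>j\<in>(S - Od) \<inter> A. G j) + (\<Sum>j\<in>(S - Od) - A. G j)"
    using fin by (intro sum.Int_Diff) auto
  have a3: "(\<Sum>j\<in>A. F j) = (\<Sum>j\<in>A \<inter> Od. F j) + (\<Sum>j\<in>A - Od. F j)" using fA by (rule sum.Int_Diff)
  have a4: "(\<Sum>j\<in>S - A. G j) = (\<Sum>j\<in>(S - A) \<inter> Od. G j) + (\<Sum>j\<in>(S - A) - Od. G j)"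
    using fin by (intro sum.Int_Diff) auto
  have s1: "Od \<inter> A = A \<inter> Od" "(S - Od) \<inter> A = A - Od" "(S - A) \<inter> Od = Od - A" "(S - A) - Od = S - Od - A"
    using OS AS by auto
  show "(\<Sum>j\<in>Od. F j) + (\<Sum>j\<in>S - Od. G j)
       = ((\<Sum>j\<in>A \<inter> Od. F j) + (\<Sum>j\<in>S - Od - A. G j)) + ((\<Sum>j\<in>Od - A. F j) + (\<Sum>j\<in>A - Od. G j))"
    unfolding a1 a2 s1 by (simp add: ac_simps)
  show "(\<Sum>j\<in>A. F j) + (\<Sum>j\<in>S - A. G j)
       = ((\<Sum>j\<in>A \<inter> Od. F j) + (\<Sum>j\<in>S - Od - A. G j)) + ((\<Sum>j\<in>A - Od. F j) + (\<Sum>j\<in>Od - A. G j))"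
    unfolding a3 a4 s1 by (simp add: ac_simps)
qed

lemma M_insert: "finite X \<Longrightarrow> a \<notin> X \<Longrightarrow> image_mset x (mset_set (insert a X)) = add_mset (x a) (image_mset x (mset_set X))"
  by simp

lemma M_split: "finite S \<Longrightarrow> X \<subseteq> S \<Longrightarrow> image_mset x (mset_set S) = image_mset x (mset_set X) + image_mset x (mset_set (S - X))"
proof -
  assume f: "finite S" and XS: "X \<subseteq> S"
  have "S = X \<union> (S - X)" using XS by auto
  then have "mset_set S = mset_set X + mset_set (S - X)"
    using f XS by (metis Diff_disjoint finite_Diff finite_subset mset_set_Union)
  then show ?thesis by simp
qed

lemma M_diff: "finite S \<Longrightarrow> X \<subseteq> S \<Longrightarrow> image_mset x (mset_set (S - X)) = image_mset x (mset_set S) - image_mset x (mset_set X)"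
  using M_split by (metis add_diff_cancel_left')



lemma cross_gen:
  fixes S Y Od :: "nat set" and x :: "nat \<Rightarrow> real"
  assumes wo: "well_ordering I w" and fin: "finite S" and xI: "\<forall>i\<in>S. x i \<in> I"
    and mono: "\<forall>i\<in>S. \<forall>j\<in>S. i \<le> j \<longrightarrow> x i \<le> x j"
    and pS: "p \<in> S" and qS: "q \<in> S" and pq: "p < q" and consec: "\<forall>i\<in>S. \<not> (p < i \<and> i < q)"
    and YS: "Y \<subseteq> S" and pY: "p \<notin> Y" and qY: "q \<notin> Y"
    and bal: "card (Y \<inter> Od) = card (Y - Od)"
    and ext: "if p \<in> Od then (\<forall>t. hh Y Od p \<le> hh Y Od t) else (\<forall>t. hh Y Od t \<le> hh Y Od p)"
    and ov: "ov = (if p \<in> Od then p else q)" and ev: "ev = (if p \<in> Od then q else p)"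
  shows "(\<Sum>u\<in>Y \<inter> Od. w (x ov) (x u)) + (\<Sum>v\<in>Y - Od. w (x ev) (x v))
          \<le> (\<Sum>v\<in>Y - Od. w (x ov) (x v)) + (\<Sum>u\<in>Y \<inter> Od. w (x ev) (x u)) \<and>
    (strictly_well_ordering I w \<longrightarrow> x ov \<noteq> x ev \<longrightarrow>
      image_mset x (mset_set (Y \<inter> Od)) \<noteq> image_mset x (mset_set (Y - Od)) \<longrightarrow>
      (\<Sum>v\<in>Y - Od. w (x ov) (x v)) + (\<Sum>u\<in>Y \<inter> Od. w (x ev) (x u)) \<noteq> \<infinity> \<longrightarrow>
      (\<Sum>u\<in>Y \<inter> Od. w (x ov) (x u)) + (\<Sum>v\<in>Y - Od. w (x ev) (x v))
          < (\<Sum>v\<in>Y - Od. w (x ov) (x v)) + (\<Sum>u\<in>Y \<inter> Od. w (x ev) (x u)))"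
proof (cases "p \<in> Od")
  case True
  then show ?thesis using cross_oe[OF wo fin xI mono pS qS pq consec YS pY qY bal] ext ov ev by simp
next
  case False
  then show ?thesis using cross_eo[OF wo fin xI mono pS qS pq consec YS pY qY bal] ext ov ev by simp
qed

lemma hh_at_block:
  assumes pS: "p \<in> S" and alt: "\<forall>t. hh S Od t = 0 \<or> hh S Od t = 1"
  shows "hh S Od p = (if p \<in> Od then 0 else 1)"
  using hh_Suc[of S Od p] alt[rule_format, of p] alt[rule_format, of "Suc p"] pS
  by (auto split: if_splits)

lemma sblock:
  fixes S Od :: "nat set" and x :: "nat \<Rightarrow> real"
  assumes wo: "well_ordering I w" and swo: "strictly_well_ordering I w"
    and fin: "finite S" and xI: "\<forall>i\<in>S. x i \<in> I"
    and mono: "\<forall>i\<in>S. \<forall>j\<in>S. i \<le> j \<longrightarrow> x i \<le> x j"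
    and pS: "p \<in> S" and qS: "q \<in> S" and pq: "p < q" and consec: "\<forall>i\<in>S. \<not> (p < i \<and> i < q)"
    and pO: "p \<in> Od \<longleftrightarrow> q \<notin> Od" and OS: "Od \<subseteq> S" and alt: "\<forall>t. hh S Od t = 0 \<or> hh S Od t = 1"
    and cardS: "card S = 2 * card Od"
    and ov: "ov = (if p \<in> Od then p else q)" and ev: "ev = (if p \<in> Od then q else p)"
    and xne: "x ov \<noteq> x ev" and finC: "Cost w x S Od \<noteq> \<infinity>"
  shows "Cost w x S Od < Cost w x S (insert ev (Od - {p,q}))
     \<or> image_mset x (mset_set (insert ev (Od - {p,q}))) = image_mset x (mset_set (S - Od))"
proof -
  define S' where "S' = S - {p,q}"
  define Od' where "Od' = Od - {p,q}"
  define Bs where "Bs = insert ev Od'"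
  have ovO: "ov \<in> Od" and evO: "ev \<notin> Od" using ov ev pO by auto
  have pqoe: "{p,q} = {ov,ev}" "{p,q} = {ev,ov}" using ov ev by auto
  have ovS: "ov \<in> S" and evS: "ev \<in> S" using ov ev pS qS by auto
  have fO: "finite Od" using fin OS finite_subset by blast
  have F: "\<And>j. j \<in> S \<Longrightarrow> x j \<in> I" using xI by blast
  have cO: "Cost w x S Od = Cost w x S' Od'
     + ((\<Sum>j\<in>Od'. w (x ov) (x j)) + (\<Sum>j\<in>S' - Od'. w (x ev) (x j)))
     + ((\<Sum>j\<in>Od'. w (x ov) (x j)) + (\<Sum>j\<in>S' - Od'. w (x ev) (x j)))"
    using cost_split[OF wo fin xI OS ovO evS evO] unfolding S'_def Od'_def pqoe(1) .
  have BsS: "Bs \<subseteq> S" using OS evS by (auto simp: Bs_def Od'_def)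
  have evB: "ev \<in> Bs" and ovB: "ov \<notin> Bs" using ovO evO pqoe by (auto simp: Bs_def Od'_def)
  have Bsr: "Bs - {ev,ov} = Od'" using evO by (auto simp: Bs_def Od'_def pqoe)
  have cB: "Cost w x S Bs = Cost w x S' Od'
     + ((\<Sum>j\<in>Od'. w (x ev) (x j)) + (\<Sum>j\<in>S' - Od'. w (x ov) (x j)))
     + ((\<Sum>j\<in>Od'. w (x ev) (x j)) + (\<Sum>j\<in>S' - Od'. w (x ov) (x j)))"
    using cost_split[OF wo fin xI BsS evB ovS ovB] unfolding Bsr S'_def pqoe(2) .
  have S'S: "S' \<subseteq> S" and pY: "p \<notin> S'" and qY: "q \<notin> S'" by (auto simp: S'_def)
  have YO: "S' \<inter> Od = Od'" "S' - Od = S' - Od'" using OS by (auto simp: S'_def Od'_def)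
  have cOd': "card Od' = card Od - 1"
  proof -
    have "Od' = Od - {ov}" using evO pqoe by (auto simp: Od'_def)
    then show ?thesis using ovO fO by simp
  qed
  have cSO: "card (S - Od) = card Od" using cardS OS fin by (simp add: card_Diff_subset fO)
  have cS'O': "card (S' - Od') = card Od - 1"
  proof -
    have "S' - Od' = (S - Od) - {ev}" using ovO pqoe by (auto simp: S'_def Od'_def)
    then show ?thesis using evO evS fin cSO by simp
  qed
  have bal: "card (S' \<inter> Od) = card (S' - Od)" unfolding YO using cOd' cS'O' by simp
  have altr: "\<forall>t. hh S' Od' t = 0 \<or> hh S' Od' t = 1" "hh S' Od' p = hh S Od p"
    using alt_remove[OF pS qS pq consec pO alt] unfolding S'_def Od'_def by auto
  have hr: "hh S' Od' t = hh S' Od t" for t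
    unfolding S'_def Od'_def by (rule hh_restrict) auto
  have ext: "if p \<in> Od then (\<forall>t. hh S' Od p \<le> hh S' Od t) else (\<forall>t. hh S' Od t \<le> hh S' Od p)"
    using altr hr hh_at_block[OF pS alt] by (auto split: if_splits) (metis order_refl zero_le_one)+
  have CR: "(\<Sum>u\<in>S' \<inter> Od. w (x ov) (x u)) + (\<Sum>v\<in>S' - Od. w (x ev) (x v))
          \<le> (\<Sum>v\<in>S' - Od. w (x ov) (x v)) + (\<Sum>u\<in>S' \<inter> Od. w (x ev) (x u)) \<and>
    (strictly_well_ordering I w \<longrightarrow> x ov \<noteq> x ev \<longrightarrow>
      image_mset x (mset_set (S' \<inter> Od)) \<noteq> image_mset x (mset_set (S' - Od)) \<longrightarrow>
      (\<Sum>v\<in>S' - Od. w (x ov) (x v)) + (\<Sum>u\<in>S' \<inter> Od. w (x ev) (x u)) \<noteq> \<infinity> \<longrightarrow>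
      (\<Sum>u\<in>S' \<inter> Od. w (x ov) (x u)) + (\<Sum>v\<in>S' - Od. w (x ev) (x v))
          < (\<Sum>v\<in>S' - Od. w (x ov) (x v)) + (\<Sum>u\<in>S' \<inter> Od. w (x ev) (x u)))"
    by (rule cross_gen[OF wo fin xI mono pS qS pq consec S'S pY qY bal ext ov ev])
  define cOs where "cOs = (\<Sum>j\<in>Od'. w (x ov) (x j)) + (\<Sum>j\<in>S' - Od'. w (x ev) (x j))"
  define cBs where "cBs = (\<Sum>j\<in>Od'. w (x ev) (x j)) + (\<Sum>j\<in>S' - Od'. w (x ov) (x j))"
  have fS': "finite S'" using fin by (simp add: S'_def)
  have Od'S': "Od' \<subseteq> S'" using OS by (auto simp: S'_def Od'_def)
  have fOd': "finite Od'" using fO by (simp add: Od'_def)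
  show ?thesis
  proof (cases "image_mset x (mset_set Od') = image_mset x (mset_set (S' - Od'))")
    case True
    have "image_mset x (mset_set Bs) = add_mset (x ev) (image_mset x (mset_set Od'))"
      using fOd' evO by (simp add: Bs_def Od'_def)
    also have "\<dots> = add_mset (x ev) (image_mset x (mset_set (S' - Od')))" using True by simp
    also have "\<dots> = image_mset x (mset_set (S - Od))"
    proof -
      have "S - Od = insert ev (S' - Od')" using evS evO ovO pqoe by (auto simp: S'_def Od'_def)
      moreover have "ev \<notin> S' - Od'" using pqoe by (auto simp: S'_def)
      ultimately show ?thesis using fS' by simp
    qed
    finally show ?thesis unfolding Bs_def Od'_def by blast
  next
    case False
    have nmS': "Cost w x S' Od' \<noteq> -\<infinity>" using Cost_not_minf[OF wo fS' _ Od'S'] xI by (auto simp: S'_def)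
    have nmcO: "cOs \<noteq> -\<infinity>" "cBs \<noteq> -\<infinity>"
    proof -
      have "\<And>y j. y \<in> S \<Longrightarrow> j \<in> S \<Longrightarrow> w (x y) (x j) \<noteq> -\<infinity>" using wo_minf[OF wo] xI by blast
      then have nmw: "\<And>y j. y \<in> S \<Longrightarrow> j \<in> S \<Longrightarrow> w (x y) (x j) \<noteq> -\<infinity>" .
      have "(\<Sum>j\<in>Od'. w (x ov) (x j)) \<noteq> -\<infinity>"
        by (rule sum_not_minf) (use fOd' Od'S' ovS nmw in \<open>auto simp: S'_def\<close>)
      moreover have "(\<Sum>j\<in>S' - Od'. w (x ev) (x j)) \<noteq> -\<infinity>"
        by (rule sum_not_minf) (use fS' evS nmw in \<open>auto simp: S'_def\<close>)
      moreover have "(\<Sum>j\<in>Od'. w (x ev) (x j)) \<noteq> -\<infinity>"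
        by (rule sum_not_minf) (use fOd' Od'S' evS nmw in \<open>auto simp: S'_def\<close>)
      moreover have "(\<Sum>j\<in>S' - Od'. w (x ov) (x j)) \<noteq> -\<infinity>"
        by (rule sum_not_minf) (use fS' ovS nmw in \<open>auto simp: S'_def\<close>)
      ultimately have a: "(\<Sum>j\<in>Od'. w (x ov) (x j)) \<noteq> -\<infinity>" "(\<Sum>j\<in>S' - Od'. w (x ev) (x j)) \<noteq> -\<infinity>"
          "(\<Sum>j\<in>Od'. w (x ev) (x j)) \<noteq> -\<infinity>" "(\<Sum>j\<in>S' - Od'. w (x ov) (x j)) \<noteq> -\<infinity>" by blast+
      show "cOs \<noteq> -\<infinity>" "cBs \<noteq> -\<infinity>" unfolding cOs_def cBs_def using a by (auto intro: e_add_minf)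
    qed
    have finS': "Cost w x S' Od' \<noteq> \<infinity>" and fincO: "cOs \<noteq> \<infinity>"
    proof -
      have "Cost w x S' Od' + (cOs + cOs) \<noteq> \<infinity>" using finC cO unfolding cOs_def by (simp add: ac_simps)
      then show "Cost w x S' Od' \<noteq> \<infinity>" "cOs \<noteq> \<infinity>"
        using e_fin[of "Cost w x S' Od'" "cOs + cOs"] nmS' nmcO e_add_minf by auto
    qed
    show ?thesis
    proof (cases "cBs = \<infinity>")
      case True
      then have "Cost w x S Bs = \<infinity>" using cB nmS' unfolding cBs_def by simp
      then show ?thesis using finC unfolding Bs_def Od'_def by (simp add: less_le)
    next
      case cBf: False
      have "cOs < cBs"
        using CR swo xne False cBf unfolding YO cOs_def cBs_def by (simp add: ac_simps)
      then have "cOs + cOs < cBs + cBs" using fincO by (intro ereal_add_strict_mono2)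
      then have "Cost w x S' Od' + (cOs + cOs) < Cost w x S' Od' + (cBs + cBs)"
        by (rule e_add_strict1[OF order_refl _ nmS' finS'])
      then have "Cost w x S Od < Cost w x S Bs"
        using cO cB unfolding cOs_def cBs_def by (simp add: ac_simps)
      then show ?thesis unfolding Bs_def Od'_def by blast
    qed
  qed
qed



theorem main_gen:
  fixes S Od A :: "nat set" and x :: "nat \<Rightarrow> real"
  assumes wo: "well_ordering I w"
  shows "finite S \<Longrightarrow> (\<forall>i\<in>S. x i \<in> I) \<Longrightarrow> (\<forall>i\<in>S. \<forall>j\<in>S. i \<le> j \<longrightarrow> x i \<le> x j) \<Longrightarrow> Od \<subseteq> S \<Longrightarrow>
    (\<forall>t. hh S Od t = 0 \<or> hh S Od t = 1) \<Longrightarrow> card S = 2 * card Od \<Longrightarrow> A \<subseteq> S \<Longrightarrow> card A = card Od \<Longrightarrow>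
    Cost w x S Od \<le> Cost w x S A \<and>
    (strictly_well_ordering I w \<longrightarrow> Cost w x S A = Cost w x S Od \<longrightarrow> Cost w x S A \<noteq> \<infinity> \<longrightarrow>
      image_mset x (mset_set A) = image_mset x (mset_set Od) \<or> image_mset x (mset_set A) = image_mset x (mset_set (S - Od)))"
proof (induction "card S" arbitrary: S Od A rule: less_induct)
  case less
  note fin = less.prems(1) and xI = less.prems(2) and mono = less.prems(3) and OS = less.prems(4)
    and alt = less.prems(5) and cardS = less.prems(6) and AS = less.prems(7) and cardA = less.prems(8)
  let ?M = "\<lambda>X. image_mset x (mset_set X)"
  show ?case
  proof (cases "A = Od")
    case True
    then show ?thesis by simp
  next
    case False
    have fO: "finite Od" and fA: "finite A" using fin OS AS finite_subset by blast+
    define D where "D = (A - Od) \<union> (Od - A)"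
    have DS: "D \<subseteq> S" using OS AS by (auto simp: D_def)
    have Dne: "D \<noteq> {}" using False by (auto simp: D_def)
    have DO: "D \<inter> Od = Od - A" "D - Od = A - Od" by (auto simp: D_def)
    have cOA: "card (Od - A) = card (A - Od)"
    proof -
      have "card (Od - A) = card Od - card (Od \<inter> A)" using fO fA by (simp add: card_Diff_subset_Int)
      moreover have "card (A - Od) = card A - card (A \<inter> Od)" using fO fA by (simp add: card_Diff_subset_Int)
      ultimately show ?thesis using cardA by (simp add: Int_commute)
    qed
    have Dbal: "card (D \<inter> Od) = card (D - Od)" using DO cOA by simp
    obtain p q Y where pS: "p \<in> S" and qS: "q \<in> S" and pq: "p < q"
      and consec: "\<forall>i\<in>S. \<not> (p < i \<and> i < q)" and pO: "p \<in> Od \<longleftrightarrow> q \<notin> Od"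
      and Y: "Y = D \<or> Y = S - D" and pY: "p \<notin> Y" and qY: "q \<notin> Y"
      and ext: "if p \<in> Od then (\<forall>t. hh Y Od p \<le> hh Y Od t) else (\<forall>t. hh Y Od t \<le> hh Y Od p)"
      using block_exists[OF fin OS alt cardS DS Dne Dbal] by blast
    define S' where "S' = S - {p,q}"
    define Od' where "Od' = Od - {p,q}"
    define A' where "A' = A - {p,q}"
    define ov where "ov = (if p \<in> Od then p else q)"
    define ev where "ev = (if p \<in> Od then q else p)"
    define av where "av = (if p \<in> A then p else q)"
    define bv where "bv = (if p \<in> A then q else p)"
    have pA: "p \<in> A \<longleftrightarrow> q \<notin> A" using Y pY qY pO pS qS by (auto simp: D_def)
    have ovO: "ov \<in> Od" and evO: "ev \<notin> Od" and ovS: "ov \<in> S" and evS: "ev \<in> S"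
      using pO pS qS by (auto simp: ov_def ev_def)
    have avA: "av \<in> A" and bvA: "bv \<notin> A" and avS: "av \<in> S" and bvS: "bv \<in> S"
      using pA pS qS by (auto simp: av_def bv_def)
    have pq_ov: "{p,q} = {ov,ev}" by (auto simp: ov_def ev_def)
    have pq_av: "{p,q} = {av,bv}" by (auto simp: av_def bv_def)
    have pqne: "p \<noteq> q" using pq by simp
    have fS': "finite S'" using fin by (simp add: S'_def)
    have cS': "card S' = card S - 2" using pS qS pqne fin by (simp add: S'_def card_Diff_subset)
    have cS'lt: "card S' < card S"
    proof -
      have "card {p,q} \<le> card S" using fin pS qS by (intro card_mono) auto
      moreover have "card {p,q} = 2" using pqne by simp
      ultimately have "card S \<ge> 2" by simp
      then show ?thesis using cS' by simp
    qed
    have xI': "\<forall>i\<in>S'. x i \<in> I" using xI by (auto simp: S'_def)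
    have mono': "\<forall>i\<in>S'. \<forall>j\<in>S'. i \<le> j \<longrightarrow> x i \<le> x j" using mono by (auto simp: S'_def)
    have OS': "Od' \<subseteq> S'" using OS by (auto simp: S'_def Od'_def)
    have alt': "\<forall>t. hh S' Od' t = 0 \<or> hh S' Od' t = 1"
      using alt_remove(1)[OF pS qS pq consec pO alt] by (simp add: S'_def Od'_def)
    have Od'e: "Od' = Od - {ov}" using evO by (auto simp: Od'_def pq_ov)
    have A'e: "A' = A - {av}" using bvA by (auto simp: A'_def pq_av)
    have cOd': "card Od' = card Od - 1" using Od'e ovO fO by simp
    have cA': "card A' = card A - 1" using A'e avA fA by simp
    have "card Od > 0" using ovO fO card_gt_0_iff by blast
    then have cO1: "card Od \<ge> 1" by simp
    have cardS': "card S' = 2 * card Od'" using cS' cardS cOd' cO1 by simp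
    have AS': "A' \<subseteq> S'" using AS by (auto simp: S'_def A'_def)
    have cardA': "card A' = card Od'" using cA' cOd' cardA by simp
    have IH: "Cost w x S' Od' \<le> Cost w x S' A' \<and>
      (strictly_well_ordering I w \<longrightarrow> Cost w x S' A' = Cost w x S' Od' \<longrightarrow> Cost w x S' A' \<noteq> \<infinity> \<longrightarrow>
        ?M A' = ?M Od' \<or> ?M A' = ?M (S' - Od'))"
      using less.hyps[OF cS'lt fS' xI' mono' OS' alt' cardS' AS' cardA'] .
    define cO where "cO = (\<Sum>j\<in>Od'. w (x ov) (x j)) + (\<Sum>j\<in>S' - Od'. w (x ev) (x j))"
    define cA where "cA = (\<Sum>j\<in>A'. w (x av) (x j)) + (\<Sum>j\<in>S' - A'. w (x bv) (x j))"
    have decO: "Cost w x S Od = Cost w x S' Od' + cO + cO"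
      using cost_split[OF wo fin xI OS ovO evS evO] unfolding cO_def S'_def Od'_def pq_ov .
    have decA: "Cost w x S A = Cost w x S' A' + cA + cA"
      using cost_split[OF wo fin xI AS avA bvS bvA] unfolding cA_def S'_def A'_def pq_av .
    have YS: "Y \<subseteq> S" using Y DS by auto
    have Ybal: "card (Y \<inter> Od) = card (Y - Od)"
      using Y
    proof
      assume "Y = D" then show ?thesis using Dbal by simp
    next
      assume YD: "Y = S - D"
      have e1: "Y \<inter> Od = Od \<inter> A" "Y - Od = S - (Od \<union> A)" using YD OS AS by (auto simp: D_def)
      have "card (S - (Od \<union> A)) = card S - card (Od \<union> A)" using fO fA OS AS by (intro card_Diff_subset) auto
      moreover have "card (Od \<union> A) + card (Od \<inter> A) = card Od + card A" using fO fA by (rule card_Un_Int[symmetric])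
      ultimately show ?thesis unfolding e1 using cardS cardA by simp
    qed
    have CR: "(\<Sum>u\<in>Y \<inter> Od. w (x ov) (x u)) + (\<Sum>v\<in>Y - Od. w (x ev) (x v))
          \<le> (\<Sum>v\<in>Y - Od. w (x ov) (x v)) + (\<Sum>u\<in>Y \<inter> Od. w (x ev) (x u))"
      using cross_gen[OF wo fin xI mono pS qS pq consec YS pY qY Ybal ext ov_def ev_def] by blast
    have cross: "cO \<le> cA"
      using Y
    proof
      assume YD: "Y = D"
      have ao: "av = ov" "bv = ev" using YD pY qY pO pS qS by (auto simp: D_def av_def ov_def bv_def ev_def)
      have e: "Y \<inter> Od = Od' - A'" "Y - Od = A' - Od'" using YD pY qY by (auto simp: D_def Od'_def A'_def)
      show ?thesis
        unfolding cO_def cA_def ao split_sums[OF fS' OS' AS'] using CR unfolding e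
        by (intro add_left_mono) (simp add: ac_simps)
    next
      assume YD: "Y = S - D"
      have ao: "av = ev" "bv = ov" using YD pY qY pO pS qS by (auto simp: D_def av_def ov_def bv_def ev_def)
      have e: "Y \<inter> Od = A' \<inter> Od'" "Y - Od = S' - Od' - A'" using YD pY qY OS AS
        by (auto simp: D_def Od'_def A'_def S'_def)
      have s1: "cO = ((\<Sum>j\<in>A' \<inter> Od'. w (x ov) (x j)) + (\<Sum>j\<in>S' - Od' - A'. w (x ev) (x j)))
                + ((\<Sum>j\<in>Od' - A'. w (x ov) (x j)) + (\<Sum>j\<in>A' - Od'. w (x ev) (x j)))"
        unfolding cO_def by (rule split_sums(1)[OF fS' OS' AS'])
      have s2: "cA = ((\<Sum>j\<in>A' \<inter> Od'. w (x ev) (x j)) + (\<Sum>j\<in>S' - Od' - A'. w (x ov) (x j)))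
                + ((\<Sum>j\<in>A' - Od'. w (x ev) (x j)) + (\<Sum>j\<in>Od' - A'. w (x ov) (x j)))"
        unfolding cA_def ao by (rule split_sums(2)[OF fS' OS' AS'])
      have X: "(\<Sum>j\<in>A' \<inter> Od'. w (x ov) (x j)) + (\<Sum>j\<in>S' - Od' - A'. w (x ev) (x j))
          \<le> (\<Sum>j\<in>A' \<inter> Od'. w (x ev) (x j)) + (\<Sum>j\<in>S' - Od' - A'. w (x ov) (x j))"
        using CR unfolding e by (simp add: ac_simps)
      have R: "(\<Sum>j\<in>A' - Od'. w (x ev) (x j)) + (\<Sum>j\<in>Od' - A'. w (x ov) (x j))
          = (\<Sum>j\<in>Od' - A'. w (x ov) (x j)) + (\<Sum>j\<in>A' - Od'. w (x ev) (x j))" by (simp add: ac_simps)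
      show ?thesis unfolding s1 s2 R using X by (rule add_right_mono)
    qed
    have part1: "Cost w x S Od \<le> Cost w x S A"
    proof -
      have "cO + cO \<le> cA + cA" by (rule add_mono[OF cross cross])
      then have "Cost w x S' Od' + (cO + cO) \<le> Cost w x S' A' + (cA + cA)"
        using conjunct1[OF IH] by (rule add_mono[rotated])
      then show ?thesis unfolding decO decA by (simp add: ac_simps)
    qed
    have part2: "?M A = ?M Od \<or> ?M A = ?M (S - Od)"
      if swo: "strictly_well_ordering I w" and eqC: "Cost w x S A = Cost w x S Od" and finC: "Cost w x S A \<noteq> \<infinity>"
    proof -
      have nmw: "\<And>y j. y \<in> S \<Longrightarrow> j \<in> S \<Longrightarrow> w (x y) (x j) \<noteq> -\<infinity>" using wo_minf[OF wo] xI by blast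
      have nmcO: "cO \<noteq> -\<infinity>"
      proof -
        have "(\<Sum>j\<in>Od'. w (x ov) (x j)) \<noteq> -\<infinity>"
          by (rule sum_not_minf) (use fO ovS nmw OS in \<open>auto simp: Od'_def\<close>)
        moreover have "(\<Sum>j\<in>S' - Od'. w (x ev) (x j)) \<noteq> -\<infinity>"
          by (rule sum_not_minf) (use fS' evS nmw in \<open>auto simp: S'_def\<close>)
        ultimately show ?thesis unfolding cO_def by (rule e_add_minf)
      qed
      have nmcA: "cA \<noteq> -\<infinity>"
      proof -
        have "(\<Sum>j\<in>A'. w (x av) (x j)) \<noteq> -\<infinity>"
          by (rule sum_not_minf) (use fA avS nmw AS in \<open>auto simp: A'_def\<close>)
        moreover have "(\<Sum>j\<in>S' - A'. w (x bv) (x j)) \<noteq> -\<infinity>"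
          by (rule sum_not_minf) (use fS' bvS nmw in \<open>auto simp: S'_def\<close>)
        ultimately show ?thesis unfolding cA_def by (rule e_add_minf)
      qed
      have nmO': "Cost w x S' Od' \<noteq> -\<infinity>" by (rule Cost_not_minf[OF wo fS' xI' OS'])
      have nmA': "Cost w x S' A' \<noteq> -\<infinity>" by (rule Cost_not_minf[OF wo fS' xI' AS'])
      have ccA: "cA + cA \<noteq> -\<infinity>" "cO + cO \<noteq> -\<infinity>" using nmcA nmcO by (auto intro: e_add_minf)
      have sumA: "Cost w x S' A' + (cA + cA) \<noteq> \<infinity>" using finC decA by (simp add: ac_simps)
      have cc: "cO + cO \<le> cA + cA" by (rule add_mono[OF cross cross])
      have eq2: "Cost w x S' Od' + (cO + cO) = Cost w x S' A' + (cA + cA)"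
        using eqC decO decA by (simp add: ac_simps)
      have tight: "Cost w x S' Od' = Cost w x S' A'"
        by (rule e_tight[OF conjunct1[OF IH] cc eq2 sumA nmO' ccA(2)])
      have finA': "Cost w x S' A' \<noteq> \<infinity>" using e_fin[OF sumA nmA' ccA(1)] by blast
      have IH2: "?M A' = ?M Od' \<or> ?M A' = ?M (S' - Od')" using IH swo tight finA' by auto
      have fA': "finite A'" and fOd': "finite Od'" using fA fO by (auto simp: A'_def Od'_def)
      have MA: "?M A = add_mset (x av) (?M A')"
      proof -
        have "A = insert av A'" using avA A'e by auto
        moreover have "av \<notin> A'" using A'e by auto
        ultimately show ?thesis using fA' by simp
      qed
      have MO: "?M Od = add_mset (x ov) (?M Od')"
      proof -
        have "Od = insert ov Od'" using ovO Od'e by auto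
        moreover have "ov \<notin> Od'" using Od'e by auto
        ultimately show ?thesis using fOd' by simp
      qed
      have MSO: "?M (S - Od) = add_mset (x ev) (?M (S' - Od'))"
      proof -
        have "S - Od = insert ev (S' - Od')" using evS evO ovO pq_ov by (auto simp: S'_def Od'_def)
        moreover have "ev \<notin> S' - Od'" using pq_ov by (auto simp: S'_def)
        ultimately show ?thesis using fS' by simp
      qed
      have MSA: "?M (S - A) = add_mset (x bv) (?M (S' - A'))"
      proof -
        have "S - A = insert bv (S' - A')" using bvS bvA avA pq_av by (auto simp: S'_def A'_def)
        moreover have "bv \<notin> S' - A'" using pq_av by (auto simp: S'_def)
        ultimately show ?thesis using fS' by simp
      qed
      have MS'1: "?M S' = ?M A' + ?M (S' - A')" using M_split[OF fS' AS'] .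
      have MS'2: "?M S' = ?M Od' + ?M (S' - Od')" using M_split[OF fS' OS'] .
      have MSA2: "?M (S - A) = ?M S - ?M A" using M_diff[OF fin AS] .
      have MSO2: "?M Od = ?M S - ?M (S - Od)"
        using M_split[OF fin OS, of x] by simp
      have MAc: "?M A = ?M S - ?M (S - A)" using M_split[OF fin AS, of x] by simp
      define Bs where "Bs = insert ev Od'"
      have BsS: "Bs \<subseteq> S" using OS' evS by (auto simp: Bs_def S'_def)
      have MBs: "?M Bs = add_mset (x ev) (?M Od')"
      proof -
        have "ev \<notin> Od'" using evO by (auto simp: Od'_def)
        then show ?thesis using fOd' by (simp add: Bs_def)
      qed
      have MSBs: "?M (S - Bs) = ?M S - ?M Bs" using M_diff[OF fin BsS] .
      have CostM: "Cost w x S X = FF w (?M X) + FF w (?M (S - X))" for X by (simp add: Cost_def CC_def)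
      have SB: "Cost w x S Od < Cost w x S Bs \<or> ?M Bs = ?M (S - Od)" if "x ov \<noteq> x ev"
        using sblock[OF wo swo fin xI mono pS qS pq consec pO OS alt cardS ov_def ev_def that]
          finC eqC unfolding Bs_def Od'_def by simp
      show ?thesis
      proof (cases "av = ov")
        case True
        then have bvev: "bv = ev" using pqne unfolding av_def ov_def bv_def ev_def by (auto split: if_splits)
        show ?thesis using IH2
        proof
          assume "?M A' = ?M Od'"
          then show ?thesis using MA MO True by simp
        next
          assume h: "?M A' = ?M (S' - Od')"
          show ?thesis
          proof (cases "x ov = x ev")
            case True
            then show ?thesis using MA MSO h \<open>av = ov\<close> by simp
          next
            case xne: False
            have "?M (S' - Od') + ?M (S' - A') = ?M (S' - Od') + ?M Od'"
              using MS'1 MS'2 h by (simp add: add.commute)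
            then have "?M (S' - A') = ?M Od'" by (rule add_left_imp_eq)
            then have m1: "?M (S - A) = ?M Bs" using MSA MBs bvev by simp
            have m2: "?M A = ?M (S - Bs)" using MAc MSBs m1 by simp
            have "Cost w x S A = Cost w x S Bs" unfolding CostM m1 m2 by (simp add: ac_simps)
            then have "?M Bs = ?M (S - Od)" using SB[OF xne] eqC by auto
            then have "?M (S - A) = ?M (S - Od)" using m1 by simp
            then have "?M A = ?M Od" using MAc MSO2 by simp
            then show ?thesis by blast
          qed
        qed
      next
        case False
        then have avev: "av = ev" using pqne unfolding av_def ov_def bv_def ev_def by (auto split: if_splits)
        show ?thesis using IH2
        proof
          assume h: "?M A' = ?M (S' - Od')"
          then show ?thesis using MA MSO avev by simp
        next
          assume h: "?M A' = ?M Od'"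
          show ?thesis
          proof (cases "x ov = x ev")
            case True
            then show ?thesis using MA MO h avev by simp
          next
            case xne: False
            have m1: "?M A = ?M Bs" using MA MBs h avev by simp
            have m2: "?M (S - A) = ?M (S - Bs)" using MSA2 MSBs m1 by simp
            have "Cost w x S A = Cost w x S Bs" unfolding CostM m1 m2 by simp
            then have "?M Bs = ?M (S - Od)" using SB[OF xne] eqC by auto
            then show ?thesis using m1 by simp
          qed
        qed
      qed
    qed
    show ?thesis using part1 part2 by blast
  qed
qed



lemma Od_char: fixes t n :: nat shows "t \<in> (\<lambda>k. 2*k - 1) ` {1..n} \<longleftrightarrow> odd t \<and> t < 2*n"
proof
  assume "t \<in> (\<lambda>k. 2*k - 1) ` {1..n}"
  then obtain k where "k \<in> {1..n}" "t = 2*k - 1" by auto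
  then show "odd t \<and> t < 2*n" by auto
next
  assume a: "odd t \<and> t < 2*n"
  then obtain m where m: "t = 2*m + 1" by (metis oddE)
  then have "Suc m \<in> {1..n}" "t = 2 * Suc m - 1" using a by auto
  then show "t \<in> (\<lambda>k. 2*k - 1) ` {1..n}" by blast
qed

lemma E_char: fixes t n :: nat shows "t \<in> (\<lambda>k. 2*k) ` {1..n} \<longleftrightarrow> even t \<and> 2 \<le> t \<and> t \<le> 2*n"
proof
  assume "t \<in> (\<lambda>k. 2*k) ` {1..n}"
  then obtain k where "k \<in> {1..n}" "t = 2*k" by auto
  then show "even t \<and> 2 \<le> t \<and> t \<le> 2*n" by auto
next
  assume a: "even t \<and> 2 \<le> t \<and> t \<le> 2*n"
  then obtain m where m: "t = 2*m" by (metis evenE)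
  then have "m \<in> {1..n}" using a by auto
  then show "t \<in> (\<lambda>k. 2*k) ` {1..n}" using m by blast
qed

lemma hh_alt:
  "hh {1..2*n} ((\<lambda>k. 2*k - 1) ` {1..n}) t = (if even t \<and> 2 \<le> t \<and> t \<le> 2*n then 1 else 0)"
proof (induction t)
  case 0
  then show ?case by simp
next
  case (Suc t)
  have h: "hh {1..2*n} ((\<lambda>k. 2*k - 1) ` {1..n}) (Suc t) = hh {1..2*n} ((\<lambda>k. 2*k - 1) ` {1..n}) t
     + (if 1 \<le> t \<and> t \<le> 2*n then (if odd t \<and> t < 2*n then 1 else -1) else 0)"
    by (simp only: hh_Suc Od_char atLeastAtMost_iff)
  show ?case
  proof (cases "even t")
    case True
    then have "odd (Suc t)" by simp
    then show ?thesis unfolding h Suc.IH using True by (auto; presburger)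
  next
    case False
    then have "even (Suc t)" by simp
    then show ?thesis unfolding h Suc.IH using False by (auto; presburger)
  qed
qed

theorem proposition3p1:
  fixes I :: "real set" and w :: "real \<Rightarrow> real \<Rightarrow> ereal" and n :: nat
    and x :: "nat \<Rightarrow> real" and A :: "nat set"
  assumes "is_interval I"
    and "well_ordering I w"
    and "\<forall>k\<in>{1..2*n}. x k \<in> I"
    and "\<forall>k\<in>{1..<2*n}. x k \<le> x (Suc k)"
    and "A \<subseteq> {1..2*n}" and "card A = n"
  shows "(cn w (xsub x ((\<lambda>k. 2*k - 1) ` {1..n})) + cn w (xsub x ((\<lambda>k. 2*k) ` {1..n}))
           \<le> cn w (xsub x A) + cn w (xsub x ({1..2*n} - A))) \<and>
         (strictly_well_ordering I w \<and> cn w (xsub x A) + cn w (xsub x ({1..2*n} - A)) < \<infinity> \<longrightarrow>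
         (cn w (xsub x A) + cn w (xsub x ({1..2*n} - A)) =
            Min {cn w (xsub x B) + cn w (xsub x ({1..2*n} - B)) | B. B \<subseteq> {1..2*n} \<and> card B = n}
          \<longleftrightarrow> image_mset x (mset_set A) = image_mset (\<lambda>k. x (2*k)) (mset_set {1..n})
            \<or> image_mset x (mset_set A) = image_mset (\<lambda>k. x (2*k - 1)) (mset_set {1..n})))"
proof -
  note wo = assms(2)
  define S where "S = {1..2*n}"
  define Od where "Od = (\<lambda>k. 2*k - 1) ` {1..n}"
  define E where "E = (\<lambda>k. 2*k) ` {1..n}"
  have fin: "finite S" by (simp add: S_def)
  have xI: "\<forall>i\<in>S. x i \<in> I" using assms(3) by (simp add: S_def)
  have mono: "\<forall>i\<in>S. \<forall>j\<in>S. i \<le> j \<longrightarrow> x i \<le> x j"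
  proof (intro ballI impI)
    fix i j assume i: "i \<in> S" and j: "j \<in> S" and ij: "i \<le> j"
    have "\<forall>d. i + d \<le> 2*n \<longrightarrow> x i \<le> x (i + d)"
    proof
      fix d show "i + d \<le> 2*n \<longrightarrow> x i \<le> x (i + d)"
      proof (induction d)
        case 0 then show ?case by simp
      next
        case (Suc d)
        show ?case
        proof
          assume "i + Suc d \<le> 2*n"
          then have "i + d \<in> {1..<2*n}" using i by (auto simp: S_def)
          then have "x (i + d) \<le> x (Suc (i + d))" using assms(4) by blast
          then show "x i \<le> x (i + Suc d)" using Suc \<open>i + Suc d \<le> 2*n\<close> by simp
        qed
      qed
    qed
    then show "x i \<le> x j" using j ij by (metis S_def atLeastAtMost_iff le_add_diff_inverse)
  qed
  have OS: "Od \<subseteq> S" using Od_char by (auto simp: S_def Od_def)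
  have alt: "\<forall>t. hh S Od t = 0 \<or> hh S Od t = 1" unfolding S_def Od_def hh_alt by simp
  have injO: "inj_on (\<lambda>k. 2*k - 1) {1..n}" by (auto simp: inj_on_def)
  have injE: "inj_on (\<lambda>k::nat. 2*k) {1..n}" by (auto simp: inj_on_def)
  have cO: "card Od = n" using injO by (simp add: Od_def card_image)
  have cardS: "card S = 2 * card Od" using cO by (simp add: S_def)
  have AS: "A \<subseteq> S" using assms(5) by (simp add: S_def)
  have cA: "card A = card Od" using assms(6) cO by simp
  have SO: "S - Od = E"
  proof -
    have "t \<in> S - Od \<longleftrightarrow> t \<in> E" for t
      unfolding S_def Od_def E_def Diff_iff Od_char E_char atLeastAtMost_iff by presburger
    then show ?thesis by blast
  qed
  have cnC: "cn w (xsub x B) = CC w x B" for B by (rule cn_xsub)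
  have CostC: "cn w (xsub x B) + cn w (xsub x (S - B)) = Cost w x S B" for B
    by (simp add: cnC Cost_def)
  have MG: "\<And>B. B \<subseteq> S \<Longrightarrow> card B = card Od \<Longrightarrow> Cost w x S Od \<le> Cost w x S B \<and>
    (strictly_well_ordering I w \<longrightarrow> Cost w x S B = Cost w x S Od \<longrightarrow> Cost w x S B \<noteq> \<infinity> \<longrightarrow>
      image_mset x (mset_set B) = image_mset x (mset_set Od) \<or> image_mset x (mset_set B) = image_mset x (mset_set (S - Od)))"
    by (rule main_gen[OF wo fin xI mono OS alt cardS])
  have part1: "Cost w x S Od \<le> Cost w x S A" using MG[OF AS cA] by blast
  have first: "cn w (xsub x Od) + cn w (xsub x E) \<le> cn w (xsub x A) + cn w (xsub x (S - A))"
    using part1 unfolding CostC[symmetric] SO .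
  have MinEq: "Min {cn w (xsub x B) + cn w (xsub x (S - B)) | B. B \<subseteq> S \<and> card B = n} = Cost w x S Od"
  proof -
    have eqset: "{cn w (xsub x B) + cn w (xsub x (S - B)) | B. B \<subseteq> S \<and> card B = n}
        = (\<lambda>B. Cost w x S B) ` {B. B \<subseteq> S \<and> card B = n}"
      using CostC by auto
    have finB: "finite {B. B \<subseteq> S \<and> card B = n}"
      by (rule finite_subset[of _ "Pow S"]) (auto simp: fin)
    show ?thesis unfolding eqset
    proof (rule Min_eqI)
      show "finite ((\<lambda>B. Cost w x S B) ` {B. B \<subseteq> S \<and> card B = n})" using finB by simp
      show "Cost w x S Od \<in> (\<lambda>B. Cost w x S B) ` {B. B \<subseteq> S \<and> card B = n}" using OS cO by blast
      fix y assume "y \<in> (\<lambda>B. Cost w x S B) ` {B. B \<subseteq> S \<and> card B = n}"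
      then obtain B where "B \<subseteq> S" "card B = n" "y = Cost w x S B" by auto
      then show "Cost w x S Od \<le> y" using MG[of B] cO by auto
    qed
  qed
  have ME: "image_mset (\<lambda>k. x (2*k)) (mset_set {1..n}) = image_mset x (mset_set E)"
    unfolding E_def image_mset_mset_set[OF injE, symmetric] by (simp add: multiset.map_comp comp_def)
  have MO: "image_mset (\<lambda>k. x (2*k - 1)) (mset_set {1..n}) = image_mset x (mset_set Od)"
    unfolding Od_def image_mset_mset_set[OF injO, symmetric] by (simp add: multiset.map_comp comp_def)
  have second: "Cost w x S A = Cost w x S Od \<longleftrightarrow>
      image_mset x (mset_set A) = image_mset x (mset_set E) \<or> image_mset x (mset_set A) = image_mset x (mset_set Od)"
    if swo: "strictly_well_ordering I w" and finA: "Cost w x S A \<noteq> \<infinity>"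
  proof
    assume "Cost w x S A = Cost w x S Od"
    then show "image_mset x (mset_set A) = image_mset x (mset_set E) \<or> image_mset x (mset_set A) = image_mset x (mset_set Od)"
      using MG[OF AS cA] swo finA SO by auto
  next
    assume h: "image_mset x (mset_set A) = image_mset x (mset_set E) \<or> image_mset x (mset_set A) = image_mset x (mset_set Od)"
    have CostM: "Cost w x S X = FF w (image_mset x (mset_set X)) + FF w (image_mset x (mset_set (S - X)))" for X
      by (simp add: Cost_def CC_def)
    have dA: "image_mset x (mset_set (S - A)) = image_mset x (mset_set S) - image_mset x (mset_set A)"
      using M_diff[OF fin AS] .
    have dO: "image_mset x (mset_set (S - Od)) = image_mset x (mset_set S) - image_mset x (mset_set Od)"
      using M_diff[OF fin OS] .
    have dOc: "image_mset x (mset_set Od) = image_mset x (mset_set S) - image_mset x (mset_set (S - Od))"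
      using M_split[OF fin OS, of x] by simp
    show "Cost w x S A = Cost w x S Od"
      using h
    proof
      assume hE: "image_mset x (mset_set A) = image_mset x (mset_set E)"
      then have "image_mset x (mset_set (S - A)) = image_mset x (mset_set Od)" using dA dOc SO by simp
      then show ?thesis unfolding CostM using hE SO by (simp add: ac_simps)
    next
      assume hO: "image_mset x (mset_set A) = image_mset x (mset_set Od)"
      then have "image_mset x (mset_set (S - A)) = image_mset x (mset_set (S - Od))" using dA dO by simp
      then show ?thesis unfolding CostM using hO by simp
    qed
  qed
  show ?thesis
  proof
    show "cn w (xsub x ((\<lambda>k. 2*k - 1) ` {1..n})) + cn w (xsub x ((\<lambda>k. 2*k) ` {1..n}))
           \<le> cn w (xsub x A) + cn w (xsub x ({1..2*n} - A))"
      using first unfolding S_def Od_def E_def .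
  next
    show "strictly_well_ordering I w \<and> cn w (xsub x A) + cn w (xsub x ({1..2*n} - A)) < \<infinity> \<longrightarrow>
         (cn w (xsub x A) + cn w (xsub x ({1..2*n} - A)) =
            Min {cn w (xsub x B) + cn w (xsub x ({1..2*n} - B)) | B. B \<subseteq> {1..2*n} \<and> card B = n}
          \<longleftrightarrow> image_mset x (mset_set A) = image_mset (\<lambda>k. x (2*k)) (mset_set {1..n})
            \<or> image_mset x (mset_set A) = image_mset (\<lambda>k. x (2*k - 1)) (mset_set {1..n}))"
    proof
      assume a: "strictly_well_ordering I w \<and> cn w (xsub x A) + cn w (xsub x ({1..2*n} - A)) < \<infinity>"
      then have finA: "Cost w x S A \<noteq> \<infinity>" using CostC[of A] unfolding S_def by auto
      have "cn w (xsub x A) + cn w (xsub x ({1..2*n} - A)) =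
            Min {cn w (xsub x B) + cn w (xsub x ({1..2*n} - B)) | B. B \<subseteq> {1..2*n} \<and> card B = n}
          \<longleftrightarrow> Cost w x S A = Cost w x S Od"
        using MinEq CostC[of A] unfolding S_def by simp
      also have "\<dots> \<longleftrightarrow> image_mset x (mset_set A) = image_mset x (mset_set E) \<or> image_mset x (mset_set A) = image_mset x (mset_set Od)"
        using second a finA by blast
      finally show "cn w (xsub x A) + cn w (xsub x ({1..2*n} - A)) =
            Min {cn w (xsub x B) + cn w (xsub x ({1..2*n} - B)) | B. B \<subseteq> {1..2*n} \<and> card B = n}
          \<longleftrightarrow> image_mset x (mset_set A) = image_mset (\<lambda>k. x (2*k)) (mset_set {1..n})
            \<or> image_mset x (mset_set A) = image_mset (\<lambda>k. x (2*k - 1)) (mset_set {1..n})"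
        unfolding ME MO .
    qed
  qed
qed

end
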